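(* Let $n\ge 1$, $d\ge 0$, $s\ge 1$ and $m_1,\dots,m_s\ge 0$ be integers, and let ${\mathcal L}={\mathcal L}_{n,d}(m_1,\dots,m_s)$. Then ${\mathcal L}$ is non-empty if $$m_i\le d\ \text{ for all } i \quad\text{and}\quad \sum_{i=1}^s m_i\le nd. \qquad (\ast)$$ Moreover, if $s\le n+2$, then ${\mathcal L}$ is non-empty if and only if the conditions $(\ast)$ are satisfied. In particular, the faces of the effective cone of the blow-up of ${\mathbb P}^n$ at $s$ general points (a divisor class being written $dH-\sum_i m_iE_i$) are given by $\{d=m_1\},\dots,\{d=m_s\}$ if $s\le n$, and by $\{d=m_1\},\dots,\{d=m_s\},\{nd=\sum_{i=1}^s m_i\}$ if $s=n+1$ or $s=n+2$.
   Context: ${\mathcal L}_{n,d}(m_1,\dots,m_s)$ denotes the linear system of hypersurfaces of degree $d$ in complex projective space ${\mathbb P}^n$ having multiplicity at least $m_i$ at $p_i$, where $p_1,\dots,p_s$ are general points. It is non-empty if it contains at least one hypersurface. On the blow-up of ${\mathbb P}^n$ at $p_1,\dots,p_s$, $H$ denotes the pull-back of a hyperplane class and $E_i$ the exceptional divisor over $p_i$. *)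

theory Defs
  imports Complex_Main
begin

text \<open>Homogeneous polynomials of degree d in the n+1 variables x_0..x_n over the complex
numbers, represented by their coefficient function on exponent vectors (nat => nat).\<close>

definition monomials_of :: "nat \<Rightarrow> nat \<Rightarrow> (nat \<Rightarrow> nat) set" where
  "monomials_of n d = {\<alpha>. (\<forall>j>n. \<alpha> j = 0) \<and> (\<Sum>j\<le>n. \<alpha> j) = d}"

definition homog_form :: "nat \<Rightarrow> nat \<Rightarrow> ((nat \<Rightarrow> nat) \<Rightarrow> complex) \<Rightarrow> bool" where
  "homog_form n d c \<longleftrightarrow> (\<forall>\<alpha>. c \<alpha> \<noteq> 0 \<longrightarrow> \<alpha> \<in> monomials_of n d)"

text \<open>Value at the point x of the partial derivative d^beta F of the form F with coefficients c.\<close>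

definition deriv_eval ::
  "nat \<Rightarrow> nat \<Rightarrow> ((nat \<Rightarrow> nat) \<Rightarrow> complex) \<Rightarrow> (nat \<Rightarrow> nat) \<Rightarrow> (nat \<Rightarrow> complex) \<Rightarrow> complex" where
  "deriv_eval n d c \<beta> x =
     (\<Sum>\<alpha>\<in>monomials_of n d. c \<alpha> *
        (\<Prod>j\<le>n. (if \<beta> j \<le> \<alpha> j
                   then of_nat (fact (\<alpha> j) div fact (\<alpha> j - \<beta> j)) * x j ^ (\<alpha> j - \<beta> j)
                   else 0)))"

definition mult_ge ::
  "nat \<Rightarrow> nat \<Rightarrow> ((nat \<Rightarrow> nat) \<Rightarrow> complex) \<Rightarrow> (nat \<Rightarrow> complex) \<Rightarrow> nat \<Rightarrow> bool" where
  "mult_ge n d c p m \<longleftrightarrow>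
     (\<forall>\<beta>. (\<forall>j>n. \<beta> j = 0) \<longrightarrow> (\<Sum>j\<le>n. \<beta> j) < m \<longrightarrow> deriv_eval n d c \<beta> p = 0)"

text \<open>Configurations of s points of P^n: p i j is the j-th homogeneous coordinate of the
i-th point. A polynomial G in the variables (i,j), i<s, j<=n, is again given by its
coefficients on exponent vectors gamma :: nat => nat => nat.\<close>

definition geval :: "nat \<Rightarrow> nat \<Rightarrow> ((nat \<Rightarrow> nat \<Rightarrow> nat) \<Rightarrow> complex) \<Rightarrow> (nat \<Rightarrow> nat \<Rightarrow> complex) \<Rightarrow> complex" where
  "geval n s G p = (\<Sum>\<gamma>\<in>{\<gamma>. G \<gamma> \<noteq> 0}. G \<gamma> * (\<Prod>i<s. \<Prod>j\<le>n. p i j ^ \<gamma> i j))"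

definition valid_config :: "nat \<Rightarrow> nat \<Rightarrow> (nat \<Rightarrow> nat \<Rightarrow> complex) \<Rightarrow> bool" where
  "valid_config n s p \<longleftrightarrow> (\<forall>i<s. \<exists>j\<le>n. p i j \<noteq> 0)"

text \<open>A property holds for general points p_1..p_s of P^n: it holds on the nonempty Zariski
open set where some nonzero polynomial G in the coordinates of the points does not vanish.\<close>

definition for_general_points :: "nat \<Rightarrow> nat \<Rightarrow> ((nat \<Rightarrow> nat \<Rightarrow> complex) \<Rightarrow> bool) \<Rightarrow> bool" where
  "for_general_points n s P \<longleftrightarrow>
     (\<exists>G. finite {\<gamma>. G \<gamma> \<noteq> 0} \<and> {\<gamma>. G \<gamma> \<noteq> 0} \<noteq> {} \<and>
          (\<forall>\<gamma>. G \<gamma> \<noteq> 0 \<longrightarrow> (\<forall>i j. \<gamma> i j \<noteq> 0 \<longrightarrow> i < s \<and> j \<le> n)) \<and>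
          (\<forall>p. valid_config n s p \<longrightarrow> geval n s G p \<noteq> 0 \<longrightarrow> P p))"

text \<open>L_{n,d}(m_1,...,m_s) (indices shifted to 0..s-1) is non-empty: for general points it
contains a hypersurface, i.e. a nonzero form of degree d with the required multiplicities.\<close>

definition L_nonempty :: "nat \<Rightarrow> nat \<Rightarrow> nat \<Rightarrow> (nat \<Rightarrow> nat) \<Rightarrow> bool" where
  "L_nonempty n d s m \<longleftrightarrow>
     for_general_points n s (\<lambda>p. \<exists>c. homog_form n d c \<and> (\<exists>\<alpha>. c \<alpha> \<noteq> 0) \<and>
                                     (\<forall>i<s. mult_ge n d c (p i) (m i)))"

end

theory Submission
  imports Defs "Jordan_Normal_Form.Determinant" "HOL-Computational_Algebra.Polynomial"
begin

definition Tf :: "nat \<Rightarrow> nat \<Rightarrow> complex \<Rightarrow> complex" where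
  "Tf a b x = (if b \<le> a then of_nat (fact a div fact (a - b)) * x ^ (a - b) else 0)"

lemma deriv_eval_Tf:
  "deriv_eval n d c \<beta> x = (\<Sum>\<alpha>\<in>monomials_of n d. c \<alpha> * (\<Prod>j\<le>n. Tf (\<alpha> j) (\<beta> j) (x j)))"
  unfolding deriv_eval_def Tf_def by simp

lemma of_nat_fact_div:
  assumes "b \<le> a"
  shows "(of_nat (fact a div fact (a - b)) :: complex) = fact a / fact (a - b)"
proof -
  have "fact (a-b) dvd (fact a :: nat)" by (rule fact_dvd) simp
  then have "fact a div fact (a - b) * fact (a-b) = (fact a :: nat)" by simp
  then have "(of_nat (fact a div fact (a - b)) :: complex) * fact (a-b) = fact a"
    by (metis of_nat_fact of_nat_mult)
  then show ?thesis by (simp add: field_simps)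
qed

lemma Tf_alt: "Tf a b x = (if b \<le> a then fact a / fact (a - b) * x ^ (a - b) else 0)"
  unfolding Tf_def using of_nat_fact_div by simp

lemma Tf_Suc:
  "Tf (Suc a) b x = x * Tf a b x + (if b = 0 then 0 else of_nat b * Tf a (b - 1) x)"
proof (cases "b = 0")
  case True
  then show ?thesis by (simp add: Tf_def)
next
  case False
  show ?thesis
  proof (cases "b \<le> a")
    case True
    define k where "k = a - b"
    have a: "a = k + b" using True k_def by simp
    have 1: "Suc a - b = Suc k" using a by simp
    have 2: "a - (b - 1) = Suc k" using a False by simp
    have "Tf (Suc a) b x = fact (Suc a) / fact (Suc k) * x ^ Suc k"
      using True 1 by (simp add: Tf_alt)
    moreover have "Tf a b x = fact a / fact k * x ^ k" using True by (simp add: Tf_alt k_def)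
    moreover have "Tf a (b - 1) x = fact a / fact (Suc k) * x ^ Suc k"
      using True 2 by (simp add: Tf_alt)
    moreover have "(fact (Suc a) :: complex) / fact (Suc k) * x ^ Suc k =
        x * (fact a / fact k * x ^ k) + of_nat b * (fact a / fact (Suc k) * x ^ Suc k)"
    proof -
      have e: "(fact (Suc a) :: complex) = (of_nat (Suc k) + of_nat b) * fact a"
        using a by (simp add: algebra_simps)
      have f: "(fact (Suc k) :: complex) = of_nat (Suc k) * fact k" by simp
      have nz: "(fact k :: complex) \<noteq> 0" by simp
      have nz2: "(of_nat (Suc k) :: complex) \<noteq> 0" by (simp only: of_nat_eq_0_iff)
      show ?thesis unfolding e f using nz nz2
        by (simp del: of_nat_Suc add: field_simps)
    qed
    ultimately show ?thesis using False by simp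
  next
    case nle: False
    show ?thesis
    proof (cases "b = Suc a")
      case True
      then show ?thesis by (simp add: Tf_alt)
    next
      case False
      then show ?thesis using nle \<open>b \<noteq> 0\<close> by (simp add: Tf_alt)
    qed
  qed
qed


lemma finite_mon: "finite (monomials_of n d)"
proof -
  have "monomials_of n d \<subseteq> (\<lambda>f j. if j \<le> n then f j else 0) ` ({..n} \<rightarrow>\<^sub>E {..d})"
  proof
    fix \<alpha> assume a: "\<alpha> \<in> monomials_of n d"
    then have z: "\<forall>j>n. \<alpha> j = 0" and s: "(\<Sum>j\<le>n. \<alpha> j) = d" by (auto simp: monomials_of_def)
    have le: "\<alpha> j \<le> d" if "j \<le> n" for j
      using s member_le_sum[of j "{..n}" \<alpha>] that by simp
    let ?f = "restrict \<alpha> {..n}"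
    have "?f \<in> {..n} \<rightarrow>\<^sub>E {..d}" using le by auto
    moreover have "\<alpha> = (\<lambda>j. if j \<le> n then ?f j else 0)" using z by (auto simp: fun_eq_iff)
    ultimately show "\<alpha> \<in> (\<lambda>f j. if j \<le> n then f j else 0) ` ({..n} \<rightarrow>\<^sub>E {..d})" by blast
  qed
  moreover have "finite ({..n} \<rightarrow>\<^sub>E {..d::nat})" by (simp add: finite_PiE)
  ultimately show ?thesis using finite_subset by blast
qed

lemma sum_upd_Suc:
  fixes \<alpha> :: "nat \<Rightarrow> nat" and n :: nat
  assumes "j \<le> n"
  shows "(\<Sum>k\<le>n. (\<alpha>(j := Suc (\<alpha> j))) k) = Suc (\<Sum>k\<le>n. \<alpha> k)"
proof -
  have "(\<Sum>k\<le>n. (\<alpha>(j := Suc (\<alpha> j))) k) = (\<Sum>k\<le>n. \<alpha> k + (if k = j then 1 else 0))"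
    by (rule sum.cong) auto
  also have "\<dots> = (\<Sum>k\<le>n. \<alpha> k) + (\<Sum>k\<le>n. if k = j then 1 else 0)" by (simp add: sum.distrib)
  also have "(\<Sum>k\<le>n. if k = j then 1 else (0::nat)) = 1" by (subst sum.delta) (use assms in auto)
  finally show ?thesis by simp
qed

lemma sum_upd_pred:
  fixes \<alpha> :: "nat \<Rightarrow> nat" and n :: nat
  assumes "j \<le> n" "1 \<le> \<alpha> j"
  shows "(\<Sum>k\<le>n. (\<alpha>(j := \<alpha> j - 1)) k) = (\<Sum>k\<le>n. \<alpha> k) - 1"
proof -
  let ?b = "\<alpha>(j := \<alpha> j - 1)"
  have "\<alpha> = ?b(j := Suc (?b j))" using assms by (auto simp: fun_eq_iff)
  then have "(\<Sum>k\<le>n. \<alpha> k) = Suc (\<Sum>k\<le>n. ?b k)"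
    using sum_upd_Suc[OF assms(1), of ?b] by metis
  then show ?thesis by simp
qed

lemma bij_mon_Suc:
  assumes "j \<le> n"
  shows "bij_betw (\<lambda>\<alpha>. \<alpha>(j := Suc (\<alpha> j))) (monomials_of n d)
           {\<alpha>\<in>monomials_of n (Suc d). 1 \<le> \<alpha> j}"
proof (rule bij_betw_byWitness[where f' = "\<lambda>\<alpha>. \<alpha>(j := \<alpha> j - 1)"])
  show "\<forall>a\<in>monomials_of n d. (a(j := Suc (a j)))(j := (a(j := Suc (a j))) j - 1) = a"
    by (auto simp: fun_eq_iff)
  show "\<forall>a\<in>{\<alpha> \<in> monomials_of n (Suc d). 1 \<le> \<alpha> j}. (a(j := a j - 1))(j := Suc ((a(j := a j - 1)) j)) = a"
    by (auto simp: fun_eq_iff)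
  show "(\<lambda>\<alpha>. \<alpha>(j := Suc (\<alpha> j))) ` monomials_of n d \<subseteq> {\<alpha> \<in> monomials_of n (Suc d). 1 \<le> \<alpha> j}"
    using assms sum_upd_Suc[OF assms] by (auto simp: monomials_of_def)
  show "(\<lambda>\<alpha>. \<alpha>(j := \<alpha> j - 1)) ` {\<alpha> \<in> monomials_of n (Suc d). 1 \<le> \<alpha> j} \<subseteq> monomials_of n d"
  proof
    fix \<beta> assume "\<beta> \<in> (\<lambda>\<alpha>. \<alpha>(j := \<alpha> j - 1)) ` {\<alpha> \<in> monomials_of n (Suc d). 1 \<le> \<alpha> j}"
    then obtain \<alpha> where b: "\<beta> = \<alpha>(j := \<alpha> j - 1)" and a: "\<alpha> \<in> monomials_of n (Suc d)" "1 \<le> \<alpha> j" by auto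
    have "(\<Sum>k\<le>n. \<beta> k) = d" using sum_upd_pred[of j n \<alpha>] assms a b by (simp add: monomials_of_def)
    then show "\<beta> \<in> monomials_of n d" using a(1) b assms by (auto simp: monomials_of_def)
  qed
qed

definition mulL :: "nat \<Rightarrow> (nat \<Rightarrow> complex) \<Rightarrow> ((nat \<Rightarrow> nat) \<Rightarrow> complex) \<Rightarrow> ((nat \<Rightarrow> nat) \<Rightarrow> complex)" where
  "mulL n a c \<alpha> = (\<Sum>j\<le>n. if 1 \<le> \<alpha> j then a j * c (\<alpha>(j := \<alpha> j - 1)) else 0)"

lemma homog_mulL:
  assumes "homog_form n d c"
  shows "homog_form n (Suc d) (mulL n a c)"
  unfolding homog_form_def
proof (intro allI impI)
  fix \<alpha> assume "mulL n a c \<alpha> \<noteq> 0"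
  then obtain j where "j \<in> {..n}" "(if 1 \<le> \<alpha> j then a j * c (\<alpha>(j := \<alpha> j - 1)) else 0) \<noteq> 0"
    unfolding mulL_def by (rule sum.not_neutral_contains_not_neutral)
  then have j: "j \<le> n" "1 \<le> \<alpha> j" "c (\<alpha>(j := \<alpha> j - 1)) \<noteq> 0"
    by (auto split: if_splits)
  then have m: "\<alpha>(j := \<alpha> j - 1) \<in> monomials_of n d" using assms by (auto simp: homog_form_def)
  have "(\<alpha>(j := \<alpha> j - 1))(j := Suc ((\<alpha>(j := \<alpha> j - 1)) j)) = \<alpha>" using j by (auto simp: fun_eq_iff)
  moreover have "(\<alpha>(j := \<alpha> j - 1))(j := Suc ((\<alpha>(j := \<alpha> j - 1)) j)) \<in> monomials_of n (Suc d)"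
    using bij_betw_imp_surj_on[OF bij_mon_Suc[OF j(1), of d]] m by blast
  ultimately show "\<alpha> \<in> monomials_of n (Suc d)" by simp
qed

lemma deriv_mulL:
  assumes h: "homog_form n d c"
  shows "deriv_eval n (Suc d) (mulL n a c) \<beta> x =
    (\<Sum>j\<le>n. a j * x j) * deriv_eval n d c \<beta> x +
    (\<Sum>j\<le>n. if \<beta> j = 0 then 0 else a j * of_nat (\<beta> j) * deriv_eval n d c (\<beta>(j := \<beta> j - 1)) x)"
proof -
  define P where "P \<gamma> \<alpha> = (\<Prod>k\<le>n. Tf (\<alpha> k) (\<gamma> k) (x k))" for \<gamma> \<alpha> :: "nat \<Rightarrow> nat"
  have D: "deriv_eval n e c' \<gamma> x = (\<Sum>\<alpha>\<in>monomials_of n e. c' \<alpha> * P \<gamma> \<alpha>)" for e c' \<gamma>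
    unfolding deriv_eval_Tf P_def ..
  have step1: "(\<Sum>\<alpha>\<in>monomials_of n (Suc d). (if 1 \<le> \<alpha> j then c (\<alpha>(j := \<alpha> j - 1)) * P \<beta> \<alpha> else 0))
      = (\<Sum>\<alpha>\<in>monomials_of n d. c \<alpha> * P \<beta> (\<alpha>(j := Suc (\<alpha> j))))" if j: "j \<le> n" for j
  proof -
    have "(\<Sum>\<alpha>\<in>monomials_of n (Suc d). (if 1 \<le> \<alpha> j then c (\<alpha>(j := \<alpha> j - 1)) * P \<beta> \<alpha> else 0))
       = (\<Sum>\<alpha>\<in>{\<alpha>\<in>monomials_of n (Suc d). 1 \<le> \<alpha> j}. c (\<alpha>(j := \<alpha> j - 1)) * P \<beta> \<alpha>)"
      by (rule sum.inter_filter[OF finite_mon, symmetric])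
    also have "\<dots> = (\<Sum>\<alpha>\<in>monomials_of n d. c ((\<alpha>(j := Suc (\<alpha> j)))(j := (\<alpha>(j := Suc (\<alpha> j))) j - 1)) * P \<beta> (\<alpha>(j := Suc (\<alpha> j))))"
      by (rule sum.reindex_bij_betw[OF bij_mon_Suc[OF j], where g = "\<lambda>\<alpha>. c (\<alpha>(j := \<alpha> j - 1)) * P \<beta> \<alpha>", symmetric])
    also have "\<dots> = (\<Sum>\<alpha>\<in>monomials_of n d. c \<alpha> * P \<beta> (\<alpha>(j := Suc (\<alpha> j))))" by simp
    finally show ?thesis .
  qed
  have step2: "P \<beta> (\<alpha>(j := Suc (\<alpha> j))) = x j * P \<beta> \<alpha> +
      (if \<beta> j = 0 then 0 else of_nat (\<beta> j) * P (\<beta>(j := \<beta> j - 1)) \<alpha>)" if j: "j \<le> n" for j \<alpha>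
  proof -
    define R where "R = (\<Prod>k\<in>{..n}-{j}. Tf (\<alpha> k) (\<beta> k) (x k))"
    have jn: "j \<in> {..n}" using j by simp
    have 1: "P \<beta> (\<alpha>(j := Suc (\<alpha> j))) = Tf (Suc (\<alpha> j)) (\<beta> j) (x j) * R"
      unfolding P_def R_def by (subst prod.remove[OF finite_atMost jn]) (auto intro!: prod.cong)
    have 2: "P \<beta> \<alpha> = Tf (\<alpha> j) (\<beta> j) (x j) * R"
      unfolding P_def R_def by (subst prod.remove[OF finite_atMost jn]) (auto intro!: prod.cong)
    have 3: "P (\<beta>(j := \<beta> j - 1)) \<alpha> = Tf (\<alpha> j) (\<beta> j - 1) (x j) * R"
      unfolding P_def R_def by (subst prod.remove[OF finite_atMost jn]) (auto intro!: prod.cong)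
    show ?thesis unfolding 1 2 3 Tf_Suc by (simp add: algebra_simps)
  qed
  have "deriv_eval n (Suc d) (mulL n a c) \<beta> x =
      (\<Sum>\<alpha>\<in>monomials_of n (Suc d). \<Sum>j\<le>n. a j * (if 1 \<le> \<alpha> j then c (\<alpha>(j := \<alpha> j - 1)) * P \<beta> \<alpha> else 0))"
    unfolding D mulL_def by (auto simp: sum_distrib_right intro!: sum.cong)
  also have "\<dots> = (\<Sum>j\<le>n. a j * (\<Sum>\<alpha>\<in>monomials_of n (Suc d). (if 1 \<le> \<alpha> j then c (\<alpha>(j := \<alpha> j - 1)) * P \<beta> \<alpha> else 0)))"
    by (simp add: sum.swap[of _ "monomials_of n (Suc d)"] sum_distrib_left)
  also have "\<dots> = (\<Sum>j\<le>n. a j * (\<Sum>\<alpha>\<in>monomials_of n d. c \<alpha> * (x j * P \<beta> \<alpha> +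
      (if \<beta> j = 0 then 0 else of_nat (\<beta> j) * P (\<beta>(j := \<beta> j - 1)) \<alpha>))))"
    by (rule sum.cong[OF refl]) (simp only: atMost_iff step1 step2)
  also have "\<dots> = (\<Sum>j\<le>n. a j * x j * deriv_eval n d c \<beta> x +
      (if \<beta> j = 0 then 0 else a j * of_nat (\<beta> j) * deriv_eval n d c (\<beta>(j := \<beta> j - 1)) x))"
    unfolding D by (rule sum.cong[OF refl])
      (simp add: algebra_simps sum.distrib sum_distrib_left sum_distrib_right)
  finally show ?thesis by (simp add: sum.distrib sum_distrib_right)
qed

lemma mult_ge_mono: "mult_ge n d c q m \<Longrightarrow> m' \<le> m \<Longrightarrow> mult_ge n d c q m'"
  unfolding mult_ge_def by auto

lemma mult_step:
  assumes h: "homog_form n d c" and m: "mult_ge n d c q k"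
  shows "mult_ge n (Suc d) (mulL n a c) q (k + (if (\<Sum>j\<le>n. a j * q j) = 0 then 1 else 0))"
  unfolding mult_ge_def
proof (intro allI impI)
  fix \<beta> :: "nat \<Rightarrow> nat" assume sb: "\<forall>j>n. \<beta> j = 0"
    and lt: "(\<Sum>j\<le>n. \<beta> j) < k + (if (\<Sum>j\<le>n. a j * q j) = 0 then 1 else 0)"
  have t1: "(\<Sum>j\<le>n. a j * q j) * deriv_eval n d c \<beta> q = 0"
  proof (cases "(\<Sum>j\<le>n. a j * q j) = 0")
    case False
    then have "(\<Sum>j\<le>n. \<beta> j) < k" using lt by simp
    then have "deriv_eval n d c \<beta> q = 0" using m sb unfolding mult_ge_def by blast
    then show ?thesis by simp
  qed simp
  have t2: "(if \<beta> j = 0 then 0 else a j * of_nat (\<beta> j) * deriv_eval n d c (\<beta>(j := \<beta> j - 1)) q) = 0"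
    if j: "j \<le> n" for j
  proof (cases "\<beta> j = 0")
    case False
    have s: "(\<Sum>i\<le>n. (\<beta>(j := \<beta> j - 1)) i) = (\<Sum>i\<le>n. \<beta> i) - 1"
      using sum_upd_pred[of j n \<beta>] j False by simp
    have "\<beta> j \<le> (\<Sum>i\<le>n. \<beta> i)" using j member_le_sum[of j "{..n}" \<beta>] by simp
    then have "(\<Sum>i\<le>n. (\<beta>(j := \<beta> j - 1)) i) < k" using s lt False by (simp split: if_splits)
    moreover have "\<forall>i>n. (\<beta>(j := \<beta> j - 1)) i = 0" using sb j by simp
    ultimately have "deriv_eval n d c (\<beta>(j := \<beta> j - 1)) q = 0" using m unfolding mult_ge_def by blast
    then show ?thesis by simp
  qed simp
  show "deriv_eval n (Suc d) (mulL n a c) \<beta> q = 0"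
    unfolding deriv_mulL[OF h] using t1 t2 by simp
qed

definition c0 :: "(nat \<Rightarrow> nat) \<Rightarrow> complex" where "c0 \<alpha> = (if \<alpha> = (\<lambda>_. 0) then 1 else 0)"

lemma mon_zero: "monomials_of n 0 = {(\<lambda>_. 0) :: nat \<Rightarrow> nat}"
proof -
  have "\<alpha> = (\<lambda>_. 0)" if "\<alpha> \<in> monomials_of n 0" for \<alpha> :: "nat \<Rightarrow> nat"
  proof -
    have "\<forall>j>n. \<alpha> j = 0" "\<forall>j\<le>n. \<alpha> j = 0" using that by (auto simp: monomials_of_def)
    then show "\<alpha> = (\<lambda>_. 0)" by (metis not_le)
  qed
  moreover have "(\<lambda>_. 0) \<in> monomials_of n 0" by (simp add: monomials_of_def)
  ultimately show ?thesis by blast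
qed

lemma homog_c0: "homog_form n 0 c0"
  unfolding homog_form_def c0_def mon_zero by auto

lemma deriv_c0: "deriv_eval n 0 c0 (\<lambda>_. 0) x = 1"
  by (simp add: deriv_eval_Tf mon_zero c0_def Tf_def)

primrec prodL :: "nat \<Rightarrow> (nat \<Rightarrow> nat \<Rightarrow> complex) \<Rightarrow> nat \<Rightarrow> (nat \<Rightarrow> nat) \<Rightarrow> complex" where
  "prodL n a 0 = c0"
| "prodL n a (Suc k) = mulL n (a k) (prodL n a k)"

lemma homog_prodL: "homog_form n k (prodL n a k)"
  by (induct k) (simp_all add: homog_c0 homog_mulL)

lemma eval_prodL: "deriv_eval n k (prodL n a k) (\<lambda>_. 0) x = (\<Prod>l<k. \<Sum>j\<le>n. a l j * x j)"
  by (induct k) (simp_all add: deriv_c0 deriv_mulL homog_prodL)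

lemma card_Suc_filter:
  "card {l. l < Suc k \<and> P l} = card {l. l < k \<and> P l} + (if P k then 1 else 0)"
proof (cases "P k")
  case True
  then have "{l. l < Suc k \<and> P l} = insert k {l. l < k \<and> P l}" by (auto simp: less_Suc_eq)
  then show ?thesis using True by simp
next
  case False
  then have "{l. l < Suc k \<and> P l} = {l. l < k \<and> P l}" by (auto simp: less_Suc_eq)
  then show ?thesis using False by simp
qed

lemma mult_prodL: "mult_ge n k (prodL n a k) q (card {l. l < k \<and> (\<Sum>j\<le>n. a l j * q j) = 0})"
proof (induct k)
  case 0
  show ?case by (simp add: mult_ge_def)
next
  case (Suc k)
  show ?case using mult_step[OF homog_prodL Suc, of "a k"]
    by (simp add: card_Suc_filter)
qed

lemma exists_nonroot:
  fixes Q :: "nat \<Rightarrow> complex poly"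
  assumes "\<forall>l<k. Q l \<noteq> 0"
  shows "\<exists>z. \<forall>l<k. poly (Q l) z \<noteq> 0"
proof -
  have "finite (\<Union>l<k. {z. poly (Q l) z = 0})" using assms poly_roots_finite by auto
  then obtain z where "z \<notin> (\<Union>l<k. {z. poly (Q l) z = 0})"
    using ex_new_if_finite[OF infinite_UNIV_char_0] by blast
  then show ?thesis by auto
qed

lemma nonvanish_lin:
  fixes a :: "nat \<Rightarrow> nat \<Rightarrow> complex" and n :: nat
  assumes "\<forall>l<k. \<exists>j\<le>n. a l j \<noteq> 0"
  shows "\<exists>x. \<forall>l<k. (\<Sum>j\<le>n. a l j * x j) \<noteq> (0::complex)"
proof -
  define Q where "Q l = (\<Sum>j\<le>n. monom (a l j) j)" for l
  have cQ: "coeff (Q l) j = a l j" if "j \<le> n" for l j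
    using that by (simp add: Q_def coeff_sum coeff_monom)
  have "\<forall>l<k. Q l \<noteq> 0" using assms cQ by (metis coeff_0)
  then obtain z where z: "\<forall>l<k. poly (Q l) z \<noteq> 0" using exists_nonroot by blast
  have "poly (Q l) z = (\<Sum>j\<le>n. a l j * z ^ j)" for l by (simp add: Q_def poly_sum poly_monom)
  then show ?thesis using z by (intro exI[of _ "\<lambda>j. z ^ j"]) auto
qed

lemma lin_kernel:
  fixes p :: "nat \<Rightarrow> nat \<Rightarrow> complex" and n :: nat
  assumes fin: "finite I" and cI: "card I \<le> n" and n1: "1 \<le> n"
  shows "\<exists>a. (\<exists>j\<le>n. a j \<noteq> 0) \<and> (\<forall>i\<in>I. (\<Sum>j\<le>n. a j * p i j) = 0)"
proof -
  define xs where "xs = sorted_list_of_set I"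
  have len: "length xs = card I" and setxs: "set xs = I" using fin by (simp_all add: xs_def)
  define A :: "complex mat" where "A = mat (Suc n) (Suc n) (\<lambda>(r,j). p (xs ! min r (length xs - 1)) j)"
  have Ac: "A \<in> carrier_mat (Suc n) (Suc n)" by (simp add: A_def)
  have neq: "n \<noteq> length xs - 1" using len cI n1 by linarith
  have lt: "length xs - 1 < Suc n" using len cI by linarith
  have mn: "min n (length xs - 1) = length xs - 1" using len cI n1 by linarith
  have rows: "row A n = row A (length xs - 1)"
    by (rule eq_vecI) (use lt mn in \<open>auto simp: A_def\<close>)
  have "det A = 0" by (rule det_identical_rows[OF Ac neq _ lt rows]) simp
  then obtain v where v: "v \<in> carrier_vec (Suc n)" "v \<noteq> 0\<^sub>v (Suc n)" "A *\<^sub>v v = 0\<^sub>v (Suc n)"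
    using det_0_iff_vec_prod_zero_field[OF Ac] by blast
  have nz: "\<exists>j\<le>n. v $ j \<noteq> 0"
  proof (rule ccontr)
    assume "\<not> (\<exists>j\<le>n. v $ j \<noteq> 0)"
    then have "v = 0\<^sub>v (Suc n)" using v(1) by (intro eq_vecI) auto
    then show False using v(2) by simp
  qed
  have van: "(\<Sum>j\<le>n. v $ j * p i j) = 0" if i: "i \<in> I" for i
  proof -
    obtain r where r: "r < length xs" "xs ! r = i" using i setxs by (metis in_set_conv_nth)
    have rn: "r < Suc n" using r len cI by linarith
    have "(A *\<^sub>v v) $ r = 0" using v(3) rn by simp
    moreover have "(A *\<^sub>v v) $ r = row A r \<bullet> v" using Ac rn by simp
    moreover have "row A r \<bullet> v = (\<Sum>j<Suc n. p i j * v $ j)"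
      using r rn v(1) by (auto simp: scalar_prod_def A_def min_def intro!: sum.cong)
    ultimately have "(\<Sum>j<Suc n. p i j * v $ j) = 0" by simp
    then show ?thesis by (simp add: lessThan_Suc_atMost mult.commute)
  qed
  show ?thesis using nz van by (intro exI[of _ "\<lambda>j. v $ j"]) auto
qed

lemma mod_inj_interval:
  fixes r r' d :: nat
  assumes "r mod d = r' mod d" "r \<le> r'" "r' < r + d"
  shows "r = r'"
proof -
  have "d dvd r' - r" using assms(1,2) by (metis mod_eq_dvd_iff_nat)
  moreover have "r' - r < d" using assms by linarith
  ultimately have "r' - r = 0" by (metis dvd_imp_le neq0_conv not_less)
  then show ?thesis using assms(2) by simp
qed

lemma distribute:
  fixes m :: "nat \<Rightarrow> nat"
  assumes md: "\<forall>i<s. m i \<le> d" and sm: "(\<Sum>i<s. m i) \<le> n * d"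
  shows "\<exists>S. (\<forall>k<d. S k \<subseteq> {..<s} \<and> card (S k) \<le> n) \<and> (\<forall>i<s. m i \<le> card {k. k < d \<and> i \<in> S k})"
proof (cases "d = 0")
  case True
  then show ?thesis using md by (intro exI[of _ "\<lambda>_. {}"]) auto
next
  case False
  then have d0: "0 < d" by simp
  define P where "P i = (\<Sum>l<i. m l)" for i
  define S where "S k = {i. i < s \<and> (\<exists>r. P i \<le> r \<and> r < P i + m i \<and> r mod d = k)}" for k
  have Pmono: "P i + m i \<le> P i'" if "i < i'" for i i'
  proof -
    have "P i + m i = (\<Sum>l<Suc i. m l)" by (simp add: P_def)
    also have "\<dots> \<le> P i'" unfolding P_def using that by (intro sum_mono2) auto
    finally show ?thesis .
  qed
  have Ps: "P i + m i \<le> n * d" if "i < s" for i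
    using Pmono[OF that] sm by (simp add: P_def)
  have A: "m i \<le> card {k. k < d \<and> i \<in> S k}" if i: "i < s" for i
  proof -
    have mi: "m i \<le> d" using md i by simp
    have "inj_on (\<lambda>r. r mod d) {P i..<P i + m i}"
    proof (rule inj_onI)
      fix r r' assume r: "r \<in> {P i..<P i + m i}" and r': "r' \<in> {P i..<P i + m i}" and e: "r mod d = r' mod d"
      show "r = r'"
      proof (cases "r \<le> r'")
        case True then show ?thesis using mod_inj_interval[OF e True] r r' mi by simp
      next
        case False then show ?thesis using mod_inj_interval[OF e[symmetric]] r r' mi by simp
      qed
    qed
    then have "card ((\<lambda>r. r mod d) ` {P i..<P i + m i}) = m i" by (simp add: card_image)
    moreover have "(\<lambda>r. r mod d) ` {P i..<P i + m i} \<subseteq> {k. k < d \<and> i \<in> S k}"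
      using i d0 by (auto simp: S_def)
    moreover have "finite {k. k < d \<and> i \<in> S k}" by simp
    ultimately show ?thesis by (metis card_mono)
  qed
  have B: "card (S k) \<le> n" if k: "k < d" for k
  proof -
    define f where "f i = (SOME r. P i \<le> r \<and> r < P i + m i \<and> r mod d = k)" for i
    have f: "P i \<le> f i \<and> f i < P i + m i \<and> f i mod d = k" if "i \<in> S k" for i
    proof -
      have "\<exists>r. P i \<le> r \<and> r < P i + m i \<and> r mod d = k" using that by (simp add: S_def)
      then show ?thesis unfolding f_def by (rule someI_ex)
    qed
    have "inj_on f (S k)"
    proof (rule inj_onI)
      fix i i' assume i: "i \<in> S k" and i': "i' \<in> S k" and e: "f i = f i'"
      show "i = i'"
      proof (rule ccontr)
        assume "i \<noteq> i'"
        then consider "i < i'" | "i' < i" by linarith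
        then show False
        proof cases
          case 1 then show False using Pmono[OF 1] f[OF i] f[OF i'] e by linarith
        next
          case 2 then show False using Pmono[OF 2] f[OF i] f[OF i'] e by linarith
        qed
      qed
    qed
    moreover have "f ` S k \<subseteq> (\<lambda>q. q * d + k) ` {..<n}"
    proof
      fix y assume "y \<in> f ` S k"
      then obtain i where i: "i \<in> S k" and y: "y = f i" by blast
      have "i < s" using i by (simp add: S_def)
      then have "y < n * d" using f[OF i] Ps y by fastforce
      then have "y div d < n" by (rule less_mult_imp_div_less)
      moreover have "y = (y div d) * d + k" using f[OF i] y by (metis div_mult_mod_eq)
      ultimately show "y \<in> (\<lambda>q. q * d + k) ` {..<n}" by blast
    qed
    ultimately have "card (S k) \<le> card ((\<lambda>q. q * d + k) ` {..<n})"
      by (metis card_inj_on_le finite_imageI finite_lessThan)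
    also have "\<dots> \<le> n" using card_image_le[of "{..<n}"] by simp
    finally show ?thesis .
  qed
  show ?thesis using A B by (intro exI[of _ S]) (auto simp: S_def)
qed

lemma forward:
  fixes n d s :: nat and m :: "nat \<Rightarrow> nat"
  assumes n1: "1 \<le> n" and md: "\<forall>i<s. m i \<le> d" and sm: "(\<Sum>i<s. m i) \<le> n * d"
  shows "L_nonempty n d s m"
proof -
  obtain S where S: "\<forall>k<d. S k \<subseteq> {..<s} \<and> card (S k) \<le> n" "\<forall>i<s. m i \<le> card {k. k < d \<and> i \<in> S k}"
    using distribute[OF md sm] by blast
  have main: "\<exists>c. homog_form n d c \<and> (\<exists>\<alpha>. c \<alpha> \<noteq> 0) \<and> (\<forall>i<s. mult_ge n d c (p i) (m i))"
    for p :: "nat \<Rightarrow> nat \<Rightarrow> complex"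
  proof -
    have "\<forall>k<d. \<exists>a. (\<exists>j\<le>n. a j \<noteq> 0) \<and> (\<forall>i\<in>S k. (\<Sum>j\<le>n. a j * p i j) = 0)"
    proof (intro allI impI)
      fix k assume k: "k < d"
      have fin: "finite (S k)" using S(1) k by (meson finite_lessThan finite_subset)
      show "\<exists>a. (\<exists>j\<le>n. a j \<noteq> 0) \<and> (\<forall>i\<in>S k. (\<Sum>j\<le>n. a j * p i j) = 0)"
        using lin_kernel[OF fin _ n1, of p] S(1) k by blast
    qed
    then have "\<forall>k. \<exists>a. k < d \<longrightarrow> (\<exists>j\<le>n. a j \<noteq> 0) \<and> (\<forall>i\<in>S k. (\<Sum>j\<le>n. a j * p i j) = 0)"
      by blast
    then obtain A where A: "\<forall>k. k < d \<longrightarrow> (\<exists>j\<le>n. A k j \<noteq> 0) \<and> (\<forall>i\<in>S k. (\<Sum>j\<le>n. A k j * p i j) = 0)"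
      by (rule choice[THEN exE]) blast
    define c where "c = prodL n A d"
    have h: "homog_form n d c" unfolding c_def by (rule homog_prodL)
    obtain x where x: "\<forall>l<d. (\<Sum>j\<le>n. A l j * x j) \<noteq> 0" using nonvanish_lin[of d n A] A by blast
    have "deriv_eval n d c (\<lambda>_. 0) x \<noteq> 0" unfolding c_def eval_prodL using x by simp
    then have nz: "\<exists>\<alpha>. c \<alpha> \<noteq> 0" unfolding deriv_eval_def
      by (metis (no_types, lifting) mult_eq_0_iff sum.neutral)
    have mu: "mult_ge n d c (p i) (m i)" if i: "i < s" for i
    proof -
      have "m i \<le> card {k. k < d \<and> i \<in> S k}" using S(2) i by simp
      also have "\<dots> \<le> card {l. l < d \<and> (\<Sum>j\<le>n. A l j * p i j) = 0}"
        by (rule card_mono) (use A in auto)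
      finally show ?thesis using mult_prodL[of n d A "p i"] mult_ge_mono unfolding c_def by blast
    qed
    show ?thesis using h nz mu by blast
  qed
  define G :: "(nat \<Rightarrow> nat \<Rightarrow> nat) \<Rightarrow> complex" where "G \<gamma> = (if \<gamma> = (\<lambda>i j. 0) then 1 else 0)" for \<gamma>
  have sG: "{\<gamma>. G \<gamma> \<noteq> 0} = {\<lambda>i j. 0}" by (auto simp: G_def)
  show ?thesis unfolding L_nonempty_def for_general_points_def
    by (rule exI[of _ G]) (use main sG in \<open>auto simp: G_def\<close>)
qed


lemma Tf_diag: "Tf a a x = fact a"
  by (simp add: Tf_def)

lemma mon_lt_exists:
  assumes a: "\<alpha> \<in> monomials_of n d" and b: "\<beta> \<in> monomials_of n d" and ne: "\<alpha> \<noteq> \<beta>"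
  shows "\<exists>j\<le>n. \<alpha> j < \<beta> j"
proof (rule ccontr)
  assume "\<not> (\<exists>j\<le>n. \<alpha> j < \<beta> j)"
  then have le: "\<forall>j\<in>{..n}. \<beta> j \<le> \<alpha> j" by auto
  have eqs: "sum \<beta> {..n} = sum \<alpha> {..n}" using a b by (simp add: monomials_of_def)
  have "\<beta> j = \<alpha> j" if "j \<le> n" for j
    using sum_mono_inv[of \<beta> "{..n}" \<alpha> j] eqs le that by auto
  moreover have "\<beta> j = \<alpha> j" if "j > n" for j using a b that by (simp add: monomials_of_def)
  ultimately have "\<alpha> = \<beta>" by (metis not_le ext)
  then show False using ne by simp
qed

lemma mult_le_deg:
  assumes h: "homog_form n d c" and nz: "\<exists>\<alpha>. c \<alpha> \<noteq> 0" and m: "mult_ge n d c q k"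
  shows "k \<le> d"
proof (rule ccontr)
  assume "\<not> k \<le> d"
  obtain \<alpha>0 where a0: "c \<alpha>0 \<noteq> 0" using nz by blast
  have a0m: "\<alpha>0 \<in> monomials_of n d" using h a0 by (simp add: homog_form_def)
  then have "(\<Sum>j\<le>n. \<alpha>0 j) < k" "\<forall>j>n. \<alpha>0 j = 0" using \<open>\<not> k \<le> d\<close> by (auto simp: monomials_of_def)
  then have z: "deriv_eval n d c \<alpha>0 q = 0" using m by (simp add: mult_ge_def)
  have "deriv_eval n d c \<alpha>0 q = c \<alpha>0 * (\<Prod>j\<le>n. Tf (\<alpha>0 j) (\<alpha>0 j) (q j))"
  proof -
    have zero: "\<forall>\<alpha>\<in>monomials_of n d - {\<alpha>0}. c \<alpha> * (\<Prod>j\<le>n. Tf (\<alpha> j) (\<alpha>0 j) (q j)) = 0"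
    proof
      fix \<alpha> assume "\<alpha> \<in> monomials_of n d - {\<alpha>0}"
      then obtain j where "j \<le> n" "\<alpha> j < \<alpha>0 j" using mon_lt_exists a0m by blast
      then have "Tf (\<alpha> j) (\<alpha>0 j) (q j) = 0" by (simp add: Tf_def)
      then show "c \<alpha> * (\<Prod>j\<le>n. Tf (\<alpha> j) (\<alpha>0 j) (q j)) = 0"
        using \<open>j \<le> n\<close> by (auto simp: prod_zero_iff)
    qed
    show ?thesis unfolding deriv_eval_Tf
      by (subst sum.mono_neutral_right[OF finite_mon _ zero]) (use a0m in auto)
  qed
  also have "\<dots> \<noteq> 0" using a0 by (simp add: Tf_diag)
  finally show False using z by simp
qed

lemma Tf_scale: "Tf a b (k * x) = k ^ (a - b) * Tf a b x"
  by (simp add: Tf_def power_mult_distrib)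

lemma deriv_eval_scale:
  "deriv_eval n d c \<beta> (\<lambda>j. k * x j) = k ^ (d - (\<Sum>j\<le>n. \<beta> j)) * deriv_eval n d c \<beta> x"
proof -
  have pr: "(\<Prod>j\<le>n. Tf (\<alpha> j) (\<beta> j) (k * x j)) = k ^ (d - (\<Sum>j\<le>n. \<beta> j)) * (\<Prod>j\<le>n. Tf (\<alpha> j) (\<beta> j) (x j))"
    if a: "\<alpha> \<in> monomials_of n d" for \<alpha>
  proof (cases "\<forall>j\<le>n. \<beta> j \<le> \<alpha> j")
    case True
    have "(\<Sum>j\<le>n. \<alpha> j - \<beta> j) = d - (\<Sum>j\<le>n. \<beta> j)"
      using sum_subtractf_nat[of "{..n}" \<beta> \<alpha>] True a by (simp add: monomials_of_def)
    then have "(\<Prod>j\<le>n. k ^ (\<alpha> j - \<beta> j)) = k ^ (d - (\<Sum>j\<le>n. \<beta> j))"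
      using power_sum[of k "\<lambda>j. \<alpha> j - \<beta> j" "{..n}"] by simp
    then show ?thesis by (simp add: Tf_scale prod.distrib)
  next
    case False
    then obtain j where "j \<le> n" "\<not> \<beta> j \<le> \<alpha> j" by auto
    then have "Tf (\<alpha> j) (\<beta> j) y = 0" for y by (simp add: Tf_def)
    then show ?thesis using \<open>j \<le> n\<close> by (metis (no_types, lifting) atMost_iff finite_atMost mult_zero_right prod_zero)
  qed
  show ?thesis unfolding deriv_eval_Tf sum_distrib_left
    by (rule sum.cong[OF refl]) (simp add: pr algebra_simps)
qed

lemma mult_scale: "mult_ge n d c p m \<Longrightarrow> mult_ge n d c (\<lambda>j. k * p j) m"
  unfolding mult_ge_def by (simp add: deriv_eval_scale)

definition Dc :: "nat \<Rightarrow> ((nat \<Rightarrow> nat) \<Rightarrow> complex) \<Rightarrow> ((nat \<Rightarrow> nat) \<Rightarrow> complex)" where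
  "Dc j c \<alpha> = of_nat (Suc (\<alpha> j)) * c (\<alpha>(j := Suc (\<alpha> j)))"

lemma homog_Dc:
  assumes h: "homog_form n (Suc d) c" and j: "j \<le> n"
  shows "homog_form n d (Dc j c)"
  unfolding homog_form_def
proof (intro allI impI)
  fix \<alpha> assume "Dc j c \<alpha> \<noteq> 0"
  then have "c (\<alpha>(j := Suc (\<alpha> j))) \<noteq> 0" by (simp add: Dc_def)
  then have m: "\<alpha>(j := Suc (\<alpha> j)) \<in> monomials_of n (Suc d)" using h by (simp add: homog_form_def)
  then have "\<forall>k>n. \<alpha> k = 0" using j by (auto simp: monomials_of_def split: if_splits)
  moreover have "(\<Sum>k\<le>n. \<alpha> k) = d" using m sum_upd_Suc[OF j, of \<alpha>] by (simp add: monomials_of_def)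
  ultimately show "\<alpha> \<in> monomials_of n d" by (simp add: monomials_of_def)
qed

lemma Tf_Suc_Suc: "Tf (Suc a) (Suc b) x = of_nat (Suc a) * Tf a b x"
proof (cases "b \<le> a")
  case True
  then show ?thesis by (simp add: Tf_alt)
next
  case False
  then show ?thesis by (simp add: Tf_alt)
qed

lemma deriv_Dc:
  assumes h: "homog_form n (Suc d) c" and j: "j \<le> n"
  shows "deriv_eval n d (Dc j c) \<beta> x = deriv_eval n (Suc d) c (\<beta>(j := Suc (\<beta> j))) x"
proof -
  define P where "P \<gamma> \<alpha> = (\<Prod>k\<le>n. Tf (\<alpha> k) (\<gamma> k) (x k))" for \<gamma> \<alpha> :: "nat \<Rightarrow> nat"
  define \<beta>' where "\<beta>' = \<beta>(j := Suc (\<beta> j))"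
  have jn: "j \<in> {..n}" using j by simp
  have Pz: "P \<beta>' \<alpha> = 0" if "\<not> 1 \<le> \<alpha> j" for \<alpha>
  proof -
    have "Tf (\<alpha> j) (\<beta>' j) (x j) = 0" using that by (simp add: Tf_def \<beta>'_def)
    then show ?thesis unfolding P_def using jn by (metis finite_atMost prod_zero)
  qed
  have PS: "P \<beta>' (\<alpha>(j := Suc (\<alpha> j))) = of_nat (Suc (\<alpha> j)) * P \<beta> \<alpha>" for \<alpha>
  proof -
    define R where "R = (\<Prod>k\<in>{..n}-{j}. Tf (\<alpha> k) (\<beta> k) (x k))"
    have 1: "P \<beta>' (\<alpha>(j := Suc (\<alpha> j))) = Tf (Suc (\<alpha> j)) (Suc (\<beta> j)) (x j) * R"
      unfolding P_def R_def \<beta>'_def by (subst prod.remove[OF finite_atMost jn]) (auto intro!: prod.cong)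
    have 2: "P \<beta> \<alpha> = Tf (\<alpha> j) (\<beta> j) (x j) * R"
      unfolding P_def R_def by (subst prod.remove[OF finite_atMost jn]) (auto intro!: prod.cong)
    show ?thesis unfolding 1 2 Tf_Suc_Suc by simp
  qed
  have "deriv_eval n (Suc d) c \<beta>' x = (\<Sum>\<alpha>\<in>monomials_of n (Suc d). if 1 \<le> \<alpha> j then c \<alpha> * P \<beta>' \<alpha> else 0)"
    unfolding deriv_eval_Tf P_def[symmetric] by (rule sum.cong[OF refl]) (simp add: Pz)
  also have "\<dots> = (\<Sum>\<alpha>\<in>{\<alpha>\<in>monomials_of n (Suc d). 1 \<le> \<alpha> j}. c \<alpha> * P \<beta>' \<alpha>)"
    by (rule sum.inter_filter[OF finite_mon, symmetric])
  also have "\<dots> = (\<Sum>\<alpha>\<in>monomials_of n d. c (\<alpha>(j := Suc (\<alpha> j))) * P \<beta>' (\<alpha>(j := Suc (\<alpha> j))))"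
    by (rule sum.reindex_bij_betw[OF bij_mon_Suc[OF j], where g = "\<lambda>\<alpha>. c \<alpha> * P \<beta>' \<alpha>", symmetric])
  also have "\<dots> = deriv_eval n d (Dc j c) \<beta> x"
    unfolding deriv_eval_Tf P_def[symmetric] Dc_def by (rule sum.cong[OF refl]) (simp add: PS)
  finally show ?thesis unfolding \<beta>'_def by simp
qed

lemma mult_Dc:
  assumes h: "homog_form n (Suc d) c" and j: "j \<le> n" and m: "mult_ge n (Suc d) c p (Suc k)"
  shows "mult_ge n d (Dc j c) p k"
  unfolding mult_ge_def
proof (intro allI impI)
  fix \<beta> :: "nat \<Rightarrow> nat" assume sb: "\<forall>j>n. \<beta> j = 0" and lt: "(\<Sum>j\<le>n. \<beta> j) < k"
  have "(\<Sum>i\<le>n. (\<beta>(j := Suc (\<beta> j))) i) = Suc (\<Sum>i\<le>n. \<beta> i)" by (rule sum_upd_Suc[OF j])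
  moreover have "\<forall>i>n. (\<beta>(j := Suc (\<beta> j))) i = 0" using sb j by simp
  ultimately have "deriv_eval n (Suc d) c (\<beta>(j := Suc (\<beta> j))) p = 0"
    using m lt unfolding mult_ge_def by simp
  then show "deriv_eval n d (Dc j c) \<beta> p = 0" by (simp add: deriv_Dc[OF h j])
qed

definition FP :: "nat \<Rightarrow> nat \<Rightarrow> ((nat \<Rightarrow> nat) \<Rightarrow> complex) \<Rightarrow> (nat \<Rightarrow> complex poly) \<Rightarrow> complex poly" where
  "FP n d c \<gamma> = (\<Sum>\<alpha>\<in>monomials_of n d. smult (c \<alpha>) (\<Prod>j\<le>n. \<gamma> j ^ \<alpha> j))"

lemma eval0: "deriv_eval n d c (\<lambda>_. 0) x = (\<Sum>\<alpha>\<in>monomials_of n d. c \<alpha> * (\<Prod>j\<le>n. x j ^ \<alpha> j))"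
  by (simp add: deriv_eval_Tf Tf_def)

lemma poly_FP: "poly (FP n d c \<gamma>) t = deriv_eval n d c (\<lambda>_. 0) (\<lambda>j. poly (\<gamma> j) t)"
  by (simp add: FP_def eval0 poly_sum poly_prod)

lemma degree_FP:
  assumes "\<forall>j\<le>n. degree (\<gamma> j) \<le> e"
  shows "degree (FP n d c \<gamma>) \<le> d * e"
  unfolding FP_def
proof (rule degree_sum_le[OF finite_mon])
  fix \<alpha> assume a: "\<alpha> \<in> monomials_of n d"
  have "degree (\<Prod>j\<le>n. \<gamma> j ^ \<alpha> j) \<le> (\<Sum>j\<le>n. degree (\<gamma> j ^ \<alpha> j))"
    using degree_prod_sum_le[of "{..n}" "\<lambda>j. \<gamma> j ^ \<alpha> j"] by (simp add: o_def)
  also have "\<dots> \<le> (\<Sum>j\<le>n. \<alpha> j * e)"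
  proof (rule sum_mono)
    fix j assume "j \<in> {..n}"
    then have "degree (\<gamma> j) \<le> e" using assms by simp
    then show "degree (\<gamma> j ^ \<alpha> j) \<le> \<alpha> j * e"
      using degree_power_le[of "\<gamma> j" "\<alpha> j"] by (metis mult.commute mult_le_mono1 order_trans)
  qed
  also have "\<dots> = (\<Sum>j\<le>n. \<alpha> j) * e" by (simp add: sum_distrib_right)
  also have "\<dots> = d * e" using a by (simp add: monomials_of_def)
  finally show "degree (smult (c \<alpha>) (\<Prod>j\<le>n. \<gamma> j ^ \<alpha> j)) \<le> d * e"
    using degree_smult_le le_trans by blast
qed

lemma pderiv_sum: "pderiv (\<Sum>x\<in>A. f x) = (\<Sum>x\<in>A. pderiv (f x))"
proof (cases "finite A")
  case True
  then show ?thesis by (induct A rule: finite_induct) (simp_all add: pderiv_add)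
qed simp

lemma smult_sum_right: "smult a (\<Sum>x\<in>A. f x) = (\<Sum>x\<in>A. smult a (f x))"
proof (cases "finite A")
  case True
  then show ?thesis by (induct A rule: finite_induct) (simp_all add: smult_add_right)
qed simp

lemma pderiv_FP:
  assumes h: "homog_form n (Suc d) c"
  shows "pderiv (FP n (Suc d) c \<gamma>) = (\<Sum>j\<le>n. FP n d (Dc j c) \<gamma> * pderiv (\<gamma> j))"
proof -
  define Q where "Q \<alpha> = (\<Prod>j\<le>n. \<gamma> j ^ \<alpha> j)" for \<alpha> :: "nat \<Rightarrow> nat"
  define R where "R j \<alpha> = (\<Prod>k\<in>{..n}-{j}. \<gamma> k ^ \<alpha> k) * \<gamma> j ^ (\<alpha> j - 1)" for j and \<alpha> :: "nat \<Rightarrow> nat"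
  have dQ: "pderiv (Q \<alpha>) = (\<Sum>j\<le>n. smult (of_nat (\<alpha> j)) (R j \<alpha>) * pderiv (\<gamma> j))" for \<alpha>
    unfolding Q_def R_def pderiv_prod
    by (rule sum.cong[OF refl]) (simp add: pderiv_power algebra_simps)
  have RS: "R j (\<alpha>(j := Suc (\<alpha> j))) = Q \<alpha>" if j: "j \<le> n" for j \<alpha>
  proof -
    have jn: "j \<in> {..n}" using j by simp
    have "Q \<alpha> = \<gamma> j ^ \<alpha> j * (\<Prod>k\<in>{..n}-{j}. \<gamma> k ^ \<alpha> k)"
      unfolding Q_def by (rule prod.remove[OF finite_atMost jn])
    moreover have "(\<Prod>k\<in>{..n}-{j}. \<gamma> k ^ (\<alpha>(j := Suc (\<alpha> j))) k) = (\<Prod>k\<in>{..n}-{j}. \<gamma> k ^ \<alpha> k)"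
      by (rule prod.cong) auto
    ultimately show ?thesis unfolding R_def by (simp add: mult.commute)
  qed
  have inner: "(\<Sum>\<alpha>\<in>monomials_of n (Suc d). smult (c \<alpha> * of_nat (\<alpha> j)) (R j \<alpha>)) = FP n d (Dc j c) \<gamma>"
    if j: "j \<le> n" for j
  proof -
    have "(\<Sum>\<alpha>\<in>monomials_of n (Suc d). smult (c \<alpha> * of_nat (\<alpha> j)) (R j \<alpha>))
        = (\<Sum>\<alpha>\<in>monomials_of n (Suc d). if 1 \<le> \<alpha> j then smult (c \<alpha> * of_nat (\<alpha> j)) (R j \<alpha>) else 0)"
      by (rule sum.cong[OF refl]) auto
    also have "\<dots> = (\<Sum>\<alpha>\<in>{\<alpha>\<in>monomials_of n (Suc d). 1 \<le> \<alpha> j}. smult (c \<alpha> * of_nat (\<alpha> j)) (R j \<alpha>))"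
      by (rule sum.inter_filter[OF finite_mon, symmetric])
    also have "\<dots> = (\<Sum>\<alpha>\<in>monomials_of n d. smult (c (\<alpha>(j := Suc (\<alpha> j))) * of_nat ((\<alpha>(j := Suc (\<alpha> j))) j)) (R j (\<alpha>(j := Suc (\<alpha> j)))))"
      by (rule sum.reindex_bij_betw[OF bij_mon_Suc[OF j], where g = "\<lambda>\<alpha>. smult (c \<alpha> * of_nat (\<alpha> j)) (R j \<alpha>)", symmetric])
    also have "\<dots> = FP n d (Dc j c) \<gamma>"
      unfolding FP_def Dc_def Q_def[symmetric] by (rule sum.cong[OF refl]) (simp add: RS[OF j] mult.commute)
    finally show ?thesis .
  qed
  have "pderiv (FP n (Suc d) c \<gamma>) = (\<Sum>\<alpha>\<in>monomials_of n (Suc d). \<Sum>j\<le>n. smult (c \<alpha> * of_nat (\<alpha> j)) (R j \<alpha>) * pderiv (\<gamma> j))"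
    unfolding FP_def Q_def[symmetric] pderiv_sum pderiv_smult dQ
    by (simp add: smult_sum_right mult_smult_left)
  also have "\<dots> = (\<Sum>j\<le>n. (\<Sum>\<alpha>\<in>monomials_of n (Suc d). smult (c \<alpha> * of_nat (\<alpha> j)) (R j \<alpha>)) * pderiv (\<gamma> j))"
    by (simp add: sum.swap[of _ "monomials_of n (Suc d)"] sum_distrib_right)
  also have "\<dots> = (\<Sum>j\<le>n. FP n d (Dc j c) \<gamma> * pderiv (\<gamma> j))"
    by (rule sum.cong[OF refl]) (simp add: inner)
  finally show ?thesis .
qed

lemma dvd_from_pderiv:
  fixes P :: "complex poly"
  assumes r: "poly P a = 0" and dv: "[:-a,1:]^m dvd pderiv P"
  shows "[:-a,1:]^Suc m dvd P"
proof (cases "P = 0")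
  case True then show ?thesis by simp
next
  case False
  have o: "order a P = Suc (order a (pderiv P))" using order_pderiv[OF False r] .
  show ?thesis
  proof (cases "pderiv P = 0")
    case True
    then have "degree P = 0" by (simp add: pderiv_eq_0_iff)
    then have "P = [:coeff P 0:]" by (metis degree_0_id)
    moreover have "poly [:coeff P 0:] a = coeff P 0" by simp
    ultimately have "P = 0" using r by (metis pCons_0_0)
    then show ?thesis using False by simp
  next
    case pF: False
    then have "m \<le> order a (pderiv P)" using dv order_divides by blast
    then have "Suc m \<le> order a P" using o by simp
    then show ?thesis using order_divides by blast
  qed
qed

lemma DV:
  fixes \<gamma> :: "nat \<Rightarrow> complex poly"
  assumes pa: "\<forall>j. poly (\<gamma> j) a = p j"
  shows "homog_form n d c \<Longrightarrow> mult_ge n d c p m \<Longrightarrow> [:-a, 1:] ^ m dvd FP n d c \<gamma>"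
proof (induct m arbitrary: d c)
  case 0
  then show ?case by simp
next
  case (Suc m)
  have pe: "(\<lambda>j. poly (\<gamma> j) a) = p" using pa by auto
  have root: "poly (FP n d c \<gamma>) a = 0"
    using Suc.prems(2) unfolding poly_FP pe mult_ge_def by simp
  show ?case
  proof (cases d)
    case 0
    have "FP n d c \<gamma> = [:c (\<lambda>_. 0):]" using 0 by (simp add: FP_def mon_zero)
    then have "FP n d c \<gamma> = 0" using root by simp
    then show ?thesis by simp
  next
    case (Suc d')
    have h: "homog_form n (Suc d') c" using Suc.prems(1) Suc by simp
    have m: "mult_ge n (Suc d') c p (Suc m)" using Suc.prems(2) Suc by simp
    have "[:-a, 1:] ^ m dvd FP n d' (Dc j c) \<gamma>" if j: "j \<le> n" for j
      using Suc.hyps[OF homog_Dc[OF h j] mult_Dc[OF h j m]] .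
    then have "[:-a, 1:] ^ m dvd pderiv (FP n (Suc d') c \<gamma>)"
      unfolding pderiv_FP[OF h] by (auto intro!: dvd_sum dvd_mult2)
    then show ?thesis using dvd_from_pderiv root Suc by simp
  qed
qed


lemma digits_unique:
  fixes a b :: "nat \<Rightarrow> nat" and B :: nat
  assumes "\<forall>k. a k < B" "\<forall>k. b k < B" "(\<Sum>k<N. a k * B^k) = (\<Sum>k<N. b k * B^k)"
  shows "\<forall>k<N. a k = b k"
  using assms
proof (induct N arbitrary: a b)
  case 0
  then show ?case by simp
next
  case (Suc N)
  have e: "(\<Sum>k<Suc N. f k * B^k) = f 0 + B * (\<Sum>k<N. f (Suc k) * B^k)" for f :: "nat \<Rightarrow> nat"
    by (subst sum.lessThan_Suc_shift) (simp add: sum_distrib_left algebra_simps)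
  from Suc.prems(3) have E: "a 0 + B * (\<Sum>k<N. a (Suc k) * B^k) = b 0 + B * (\<Sum>k<N. b (Suc k) * B^k)"
    by (simp only: e)
  have a0: "a 0 < B" "b 0 < B" using Suc.prems(1,2) by auto
  have "(a 0 + B * (\<Sum>k<N. a (Suc k) * B^k)) mod B = a 0" using a0 by simp
  moreover have "(b 0 + B * (\<Sum>k<N. b (Suc k) * B^k)) mod B = b 0" using a0 by simp
  ultimately have h0: "a 0 = b 0" using E by metis
  then have "B * (\<Sum>k<N. a (Suc k) * B^k) = B * (\<Sum>k<N. b (Suc k) * B^k)" using E by simp
  then have "(\<Sum>k<N. a (Suc k) * B^k) = (\<Sum>k<N. b (Suc k) * B^k)" using a0 by simp
  then have "\<forall>k<N. a (Suc k) = b (Suc k)"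
    by (intro Suc.hyps[of "\<lambda>k. a (Suc k)" "\<lambda>k. b (Suc k)"]) (use Suc.prems(1,2) in auto)
  then show ?case using h0
  proof (intro allI impI)
    fix k assume "k < Suc N" "\<forall>k<N. a (Suc k) = b (Suc k)"
    then show "a k = b k" using h0 by (cases k) auto
  qed
qed

lemma kronecker:
  fixes S :: "'x set" and fl :: "'x \<Rightarrow> nat \<Rightarrow> nat" and a :: "'x \<Rightarrow> complex"
  assumes fin: "finite S" and inj: "inj_on fl S" and bd: "\<forall>\<gamma>\<in>S. \<forall>k. fl \<gamma> k < B"
    and zero: "\<forall>\<gamma>\<in>S. \<forall>k\<ge>N. fl \<gamma> k = 0"
    and g0: "\<gamma>0 \<in> S" "a \<gamma>0 \<noteq> 0"
  shows "\<exists>z. (\<Sum>\<gamma>\<in>S. a \<gamma> * (\<Prod>k<N. (z ^ (B ^ k)) ^ fl \<gamma> k)) \<noteq> 0"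
proof -
  define enc where "enc \<gamma> = (\<Sum>k<N. fl \<gamma> k * B^k)" for \<gamma>
  have inj2: "inj_on enc S"
  proof (rule inj_onI)
    fix \<gamma> \<gamma>' assume g: "\<gamma> \<in> S" "\<gamma>' \<in> S" "enc \<gamma> = enc \<gamma>'"
    have b1: "\<forall>k. fl \<gamma> k < B" "\<forall>k. fl \<gamma>' k < B" using bd g(1,2) by auto
    have "\<forall>k<N. fl \<gamma> k = fl \<gamma>' k" using digits_unique[OF b1] g(3) unfolding enc_def by blast
    moreover have "\<forall>k\<ge>N. fl \<gamma> k = fl \<gamma>' k" using zero g(1,2) by simp
    ultimately have "fl \<gamma> = fl \<gamma>'"
    proof -
      assume a1: "\<forall>k<N. fl \<gamma> k = fl \<gamma>' k" and a2: "\<forall>k\<ge>N. fl \<gamma> k = fl \<gamma>' k"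
      show ?thesis
      proof
        fix k show "fl \<gamma> k = fl \<gamma>' k" using a1 a2 by (cases "k < N") auto
      qed
    qed
    then show "\<gamma> = \<gamma>'" using inj g(1,2) unfolding inj_on_def by blast
  qed
  define Q where "Q = (\<Sum>\<gamma>\<in>S. monom (a \<gamma>) (enc \<gamma>))"
  have "coeff Q (enc \<gamma>0) = (\<Sum>\<gamma>\<in>S. if enc \<gamma> = enc \<gamma>0 then a \<gamma> else 0)"
    unfolding Q_def coeff_sum coeff_monom by simp
  also have "\<dots> = (\<Sum>\<gamma>\<in>S. if \<gamma> = \<gamma>0 then a \<gamma> else 0)"
    using inj2 g0 by (intro sum.cong) (auto dest: inj_onD)
  also have "\<dots> = a \<gamma>0" using g0 fin by simp
  finally have "Q \<noteq> 0" using g0 by auto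
  then obtain z where z: "poly Q z \<noteq> 0" using exists_nonroot[of 1 "\<lambda>_. Q"] by auto
  have "poly Q z = (\<Sum>\<gamma>\<in>S. a \<gamma> * (\<Prod>k<N. (z ^ (B ^ k)) ^ fl \<gamma> k))"
    unfolding Q_def poly_sum poly_monom enc_def
    by (rule sum.cong[OF refl]) (simp add: power_sum power_mult[symmetric] mult.commute)
  then show ?thesis using z by auto
qed

lemma form_nonzero_point:
  assumes h: "homog_form n d c" and a0: "c \<alpha>0 \<noteq> 0"
  shows "\<exists>x. deriv_eval n d c (\<lambda>_. 0) x \<noteq> 0"
proof -
  have a0m: "\<alpha>0 \<in> monomials_of n d" using h a0 by (simp add: homog_form_def)
  have bd: "\<forall>\<alpha>\<in>monomials_of n d. \<forall>k. id \<alpha> k < Suc d"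
  proof (intro ballI allI)
    fix \<alpha> k assume a: "\<alpha> \<in> monomials_of n d"
    show "id \<alpha> k < Suc d"
    proof (cases "k \<le> n")
      case True
      then show ?thesis using a member_le_sum[of k "{..n}" \<alpha>] by (simp add: monomials_of_def)
    next
      case False
      then show ?thesis using a by (simp add: monomials_of_def)
    qed
  qed
  have zero: "\<forall>\<alpha>\<in>monomials_of n d. \<forall>k\<ge>Suc n. id \<alpha> k = 0" by (auto simp: monomials_of_def)
  obtain z where z: "(\<Sum>\<alpha>\<in>monomials_of n d. c \<alpha> * (\<Prod>k<Suc n. (z ^ (Suc d ^ k)) ^ id \<alpha> k)) \<noteq> 0"
    using kronecker[OF finite_mon inj_on_id bd zero a0m, of c] a0 by blast
  have "deriv_eval n d c (\<lambda>_. 0) (\<lambda>j. z ^ (Suc d ^ j)) =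
     (\<Sum>\<alpha>\<in>monomials_of n d. c \<alpha> * (\<Prod>k<Suc n. (z ^ (Suc d ^ k)) ^ id \<alpha> k))"
    unfolding eval0 by (simp add: lessThan_Suc_atMost)
  then show ?thesis using z by metis
qed

lemma prod_lessThan_add:
  fixes a b :: nat and f :: "nat \<Rightarrow> 'a::comm_monoid_mult"
  shows "(\<Prod>k<a+b. f k) = (\<Prod>k<a. f k) * (\<Prod>j<b. f (a+j))"
  by (induct b) (simp_all add: algebra_simps)

lemma prod_flatten:
  fixes s m :: nat and f :: "nat \<Rightarrow> 'a::comm_monoid_mult"
  shows "(\<Prod>i<s. \<Prod>j<m. f (i*m+j)) = (\<Prod>k<s*m. f k)"
proof (induct s)
  case 0
  then show ?case by simp
next
  case (Suc s)
  have "(\<Prod>k<Suc s * m. f k) = (\<Prod>k<s*m + m. f k)" by (simp add: add.commute)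
  also have "\<dots> = (\<Prod>k<s*m. f k) * (\<Prod>j<m. f (s*m+j))" by (rule prod_lessThan_add)
  finally show ?case using Suc by simp
qed

lemma geval_alt:
  "geval n s G q = (\<Sum>\<gamma>\<in>{\<gamma>. G \<gamma> \<noteq> 0}. G \<gamma> * (\<Prod>i<s. \<Prod>j\<le>n. q i j ^ \<gamma> i j))"
  by (simp add: geval_def)

lemma G_point:
  fixes G :: "(nat \<Rightarrow> nat \<Rightarrow> nat) \<Rightarrow> complex"
  assumes fin: "finite {\<gamma>. G \<gamma> \<noteq> 0}" and ne: "{\<gamma>. G \<gamma> \<noteq> 0} \<noteq> {}"
    and supp: "\<forall>\<gamma>. G \<gamma> \<noteq> 0 \<longrightarrow> (\<forall>i j. \<gamma> i j \<noteq> 0 \<longrightarrow> i < s \<and> j \<le> n)"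
  shows "\<exists>q. geval n s G q \<noteq> 0"
proof -
  define S where "S = {\<gamma>. G \<gamma> \<noteq> 0}"
  define m where "m = Suc n"
  have m0: "0 < m" by (simp add: m_def)
  define fl where "fl \<gamma> k = \<gamma> (k div m) (k mod m)" for \<gamma> :: "nat \<Rightarrow> nat \<Rightarrow> nat" and k
  have flij: "fl \<gamma> (i*m+j) = \<gamma> i j" if "j < m" for \<gamma> i j
    using that m0 by (simp add: fl_def)
  have outside: "\<gamma> i j = 0" if "\<gamma> \<in> S" "\<not> (i < s \<and> j < m)" for \<gamma> i j
  proof (rule ccontr)
    assume "\<gamma> i j \<noteq> 0"
    then have "i < s \<and> j \<le> n" using supp that(1) by (auto simp: S_def)
    then show False using that(2) by (simp add: m_def)
  qed
  have inj: "inj_on fl S"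
  proof (rule inj_onI)
    fix \<gamma> \<gamma>' assume g: "\<gamma> \<in> S" "\<gamma>' \<in> S" "fl \<gamma> = fl \<gamma>'"
    have "\<gamma> i j = \<gamma>' i j" for i j
    proof (cases "i < s \<and> j < m")
      case True
      then show ?thesis using flij[of j \<gamma> i] flij[of j \<gamma>' i] g(3) by simp
    next
      case False
      then show ?thesis using outside[OF g(1) False] outside[OF g(2) False] by simp
    qed
    then show "\<gamma> = \<gamma>'" by (simp add: fun_eq_iff)
  qed
  have fl_out: "fl \<gamma> k = 0" if "\<gamma> \<in> S" "k \<ge> s * m" for \<gamma> k
  proof -
    have "\<not> k div m < s" using that(2) m0 by (simp add: div_less_iff_less_mult)
    then show ?thesis unfolding fl_def using outside[OF that(1)] by simp
  qed
  define B where "B = Suc (\<Sum>\<gamma>\<in>S. \<Sum>k<s*m. fl \<gamma> k)"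
  have bd: "\<forall>\<gamma>\<in>S. \<forall>k. fl \<gamma> k < B"
  proof (intro ballI allI)
    fix \<gamma> k assume g: "\<gamma> \<in> S"
    show "fl \<gamma> k < B"
    proof (cases "k < s * m")
      case True
      have "fl \<gamma> k \<le> (\<Sum>k<s*m. fl \<gamma> k)" using True member_le_sum[of k "{..<s*m}" "fl \<gamma>"] by simp
      also have "\<dots> \<le> (\<Sum>\<gamma>\<in>S. \<Sum>k<s*m. fl \<gamma> k)"
        using g fin member_le_sum[of \<gamma> S "\<lambda>\<gamma>. \<Sum>k<s*m. fl \<gamma> k"] by (simp add: S_def)
      finally show ?thesis by (simp add: B_def)
    next
      case False
      then show ?thesis using fl_out[OF g] by (simp add: B_def)
    qed
  qed
  have zero: "\<forall>\<gamma>\<in>S. \<forall>k\<ge>s*m. fl \<gamma> k = 0" using fl_out by blast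
  obtain \<gamma>0 where g0: "\<gamma>0 \<in> S" using ne by (auto simp: S_def)
  then have g0': "G \<gamma>0 \<noteq> 0" by (simp add: S_def)
  obtain z where z: "(\<Sum>\<gamma>\<in>S. G \<gamma> * (\<Prod>k<s*m. (z ^ (B ^ k)) ^ fl \<gamma> k)) \<noteq> 0"
    using kronecker[OF fin[folded S_def] inj bd zero g0, of G] g0' by blast
  define q where "q i j = z ^ (B ^ (i*m+j))" for i j
  have "(\<Prod>i<s. \<Prod>j\<le>n. q i j ^ \<gamma> i j) = (\<Prod>k<s*m. (z ^ (B ^ k)) ^ fl \<gamma> k)" for \<gamma>
  proof -
    have "(\<Prod>i<s. \<Prod>j\<le>n. q i j ^ \<gamma> i j) = (\<Prod>i<s. \<Prod>j<m. (z ^ (B ^ (i*m+j))) ^ fl \<gamma> (i*m+j))"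
    proof -
      have e: "{..n} = {..<m}" by (simp add: m_def lessThan_Suc_atMost)
      show ?thesis unfolding e
      proof (intro prod.cong refl)
        fix i j assume "j \<in> {..<m}"
        then show "q i j ^ \<gamma> i j = (z ^ (B ^ (i*m+j))) ^ fl \<gamma> (i*m+j)"
          using flij[of j \<gamma> i] by (simp add: q_def)
      qed
    qed
    also have "\<dots> = (\<Prod>k<s*m. (z ^ (B ^ k)) ^ fl \<gamma> k)"
      by (rule prod_flatten[where f = "\<lambda>k. (z ^ (B ^ k)) ^ fl \<gamma> k"])
    finally show ?thesis .
  qed
  then have "geval n s G q = (\<Sum>\<gamma>\<in>S. G \<gamma> * (\<Prod>k<s*m. (z ^ (B ^ k)) ^ fl \<gamma> k))"
    unfolding geval_alt S_def by simp
  then show ?thesis using z by metis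
qed


lemma ev_hom: "comm_ring_hom (\<lambda>f::complex poly. poly f t)"
  by unfold_locales auto

lemma adj_col:
  assumes A: "A \<in> carrier_mat n n" and b: "b \<in> carrier_vec n" and k: "k < n"
  shows "(adj_mat A *\<^sub>v b) $ k = det (replace_col A b k)"
proof -
  have Ab: "replace_col A b k \<in> carrier_mat n n" using A by (auto simp: replace_col_def)
  have del: "mat_delete (replace_col A b k) i k = mat_delete A i k" for i
    using A by (intro eq_matI) (auto simp: mat_delete_def replace_col_def)
  have "det (replace_col A b k) = (\<Sum>i<n. replace_col A b k $$ (i,k) * cofactor (replace_col A b k) i k)"
    by (rule laplace_expansion_column[OF Ab k])
  also have "\<dots> = (\<Sum>i<n. b $ i * cofactor A i k)"
  proof (rule sum.cong[OF refl])
    fix i assume "i \<in> {..<n}"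
    then have "replace_col A b k $$ (i,k) = b $ i" using A k by (simp add: replace_col_def)
    then show "replace_col A b k $$ (i,k) * cofactor (replace_col A b k) i k = b $ i * cofactor A i k"
      by (simp add: cofactor_def del)
  qed
  also have "\<dots> = (adj_mat A *\<^sub>v b) $ k"
    using A b k by (auto simp: adj_mat_def mult_mat_vec_def scalar_prod_def lessThan_atLeast0 mult.commute intro!: sum.cong)
  finally show ?thesis by (rule sym)
qed

lemma adj_one: "adj_mat (1\<^sub>m n :: 'a::comm_ring_1 mat) = 1\<^sub>m n"
proof -
  have "1\<^sub>m n * adj_mat (1\<^sub>m n :: 'a mat) = det (1\<^sub>m n :: 'a mat) \<cdot>\<^sub>m 1\<^sub>m n"
    using adj_mat(2)[of "1\<^sub>m n :: 'a mat" n] by simp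
  moreover have "(1::'a) \<cdot>\<^sub>m 1\<^sub>m n = 1\<^sub>m n" by (rule eq_matI) auto
  ultimately show ?thesis using adj_mat(1)[of "1\<^sub>m n :: 'a mat" n] by simp
qed

lemma exists_nonroot_set:
  fixes \<Q> :: "complex poly set"
  assumes "finite \<Q>" "0 \<notin> \<Q>"
  shows "\<exists>z. \<forall>Q\<in>\<Q>. poly Q z \<noteq> 0"
proof -
  have "finite (\<Union>Q\<in>\<Q>. {z. poly Q z = 0})"
  proof (rule finite_UN_I[OF assms(1)])
    fix Q assume "Q \<in> \<Q>"
    then have "Q \<noteq> 0" using assms(2) by blast
    then show "finite {z. poly Q z = 0}" by (rule poly_roots_finite)
  qed
  then obtain z where "z \<notin> (\<Union>Q\<in>\<Q>. {z. poly Q z = 0})"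
    using ex_new_if_finite[OF infinite_UNIV_char_0] by blast
  then show ?thesis by auto
qed

definition Mp :: "nat \<Rightarrow> (nat \<Rightarrow> nat \<Rightarrow> 'a) \<Rightarrow> 'a mat" where
  "Mp n p = mat (Suc n) (Suc n) (\<lambda>(j,i). p i j)"

definition wp :: "nat \<Rightarrow> (nat \<Rightarrow> nat \<Rightarrow> 'a) \<Rightarrow> 'a vec" where
  "wp n p = vec (Suc n) (\<lambda>j. p (Suc n) j)"

lemma Mp_carrier: "Mp n p \<in> carrier_mat (Suc n) (Suc n)" by (simp add: Mp_def)
lemma wp_carrier: "wp n p \<in> carrier_vec (Suc n)" by (simp add: wp_def)

lemma map_Mp: "map_mat h (Mp n p) = Mp n (\<lambda>i j. h (p i j))"
  by (rule eq_matI) (auto simp: Mp_def)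

lemma map_wp: "map_vec h (wp n p) = wp n (\<lambda>i j. h (p i j))"
  by (rule eq_vecI) (auto simp: wp_def)

lemma map_replace_col:
  assumes "A \<in> carrier_mat k k" "b \<in> carrier_vec k"
  shows "map_mat h (replace_col A b i) = replace_col (map_mat h A) (map_vec h b) i"
  using assms by (intro eq_matI) (auto simp: replace_col_def)


lemma good_config:
  fixes G :: "(nat \<Rightarrow> nat \<Rightarrow> nat) \<Rightarrow> complex"
  assumes fin: "finite {\<gamma>. G \<gamma> \<noteq> 0}" and ne: "{\<gamma>. G \<gamma> \<noteq> 0} \<noteq> {}"
    and supp: "\<forall>\<gamma>. G \<gamma> \<noteq> 0 \<longrightarrow> (\<forall>i j. \<gamma> i j \<noteq> 0 \<longrightarrow> i < s \<and> j \<le> n)"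
  shows "\<exists>p. valid_config n s p \<and> geval n s G p \<noteq> 0 \<and> det (Mp n p) \<noteq> 0 \<and>
             (\<forall>i\<le>n. det (replace_col (Mp n p) (wp n p) i) \<noteq> 0)"
proof -
  obtain q where q: "geval n s G q \<noteq> 0" using G_point[OF fin ne supp] by blast
  define S where "S = {\<gamma>. G \<gamma> \<noteq> 0}"
  define ps :: "nat \<Rightarrow> nat \<Rightarrow> complex" where "ps i j = (if i \<le> n then (if j = i then 1 else 0) else 1)" for i j
  define Pl where "Pl i j = [:ps i j, q i j - ps i j:]" for i j
  define P where "P t = (\<lambda>i j. poly (Pl i j) t)" for t
  have P1: "P 1 = q" by (simp add: P_def Pl_def fun_eq_iff)
  have P0: "P 0 = ps" by (simp add: P_def Pl_def fun_eq_iff)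
  define Q0 where "Q0 = (\<Sum>\<gamma>\<in>S. smult (G \<gamma>) (\<Prod>i<s. \<Prod>j\<le>n. Pl i j ^ \<gamma> i j))"
  have pQ0: "poly Q0 t = geval n s G (P t)" for t
    unfolding Q0_def geval_alt S_def by (simp add: poly_sum poly_prod P_def)
  define Q1 where "Q1 = det (Mp n Pl)"
  define Q2 where "Q2 i = det (replace_col (Mp n Pl) (wp n Pl) i)" for i
  define ji where "ji i = (if i \<le> n then i else 0)" for i :: nat
  define Q3 where "Q3 i = Pl i (ji i)" for i
  have hom: "comm_ring_hom (\<lambda>f::complex poly. poly f t)" for t by (rule ev_hom)
  have pQ1: "poly Q1 t = det (Mp n (P t))" for t
  proof -
    have "det (map_mat (\<lambda>f. poly f t) (Mp n Pl)) = poly (det (Mp n Pl)) t"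
      by (rule comm_ring_hom.hom_det[OF hom])
    then show ?thesis unfolding Q1_def map_Mp P_def by simp
  qed
  have pQ2: "poly (Q2 i) t = det (replace_col (Mp n (P t)) (wp n (P t)) i)" for t i
  proof -
    have "det (map_mat (\<lambda>f. poly f t) (replace_col (Mp n Pl) (wp n Pl) i)) = poly (Q2 i) t"
      unfolding Q2_def by (rule comm_ring_hom.hom_det[OF hom])
    then show ?thesis
      unfolding map_replace_col[OF Mp_carrier wp_carrier] map_Mp map_wp P_def by simp
  qed
  have M0: "Mp n ps = 1\<^sub>m (Suc n)" by (rule eq_matI) (auto simp: Mp_def ps_def)
  have w0: "wp n ps = vec (Suc n) (\<lambda>_. 1)" by (rule eq_vecI) (auto simp: wp_def ps_def)
  have Q1nz: "Q1 \<noteq> 0"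
  proof
    assume "Q1 = 0"
    then have "poly Q1 0 = 0" by simp
    then show False unfolding pQ1 P0 M0 by simp
  qed
  have Q2nz: "Q2 i \<noteq> 0" if i: "i \<le> n" for i
  proof
    assume "Q2 i = 0"
    then have "poly (Q2 i) 0 = 0" by simp
    moreover have "det (replace_col (1\<^sub>m (Suc n)) (vec (Suc n) (\<lambda>_. 1)) i) = (1::complex)"
    proof -
      have "det (replace_col (1\<^sub>m (Suc n)) (vec (Suc n) (\<lambda>_. 1)) i)
          = (adj_mat (1\<^sub>m (Suc n)) *\<^sub>v vec (Suc n) (\<lambda>_. (1::complex))) $ i"
        by (rule adj_col[symmetric]) (use i in auto)
      also have "\<dots> = 1" using i by (simp add: adj_one)
      finally show ?thesis .
    qed
    ultimately show False unfolding pQ2 P0 M0 w0 by simp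
  qed
  have Q3nz: "Q3 i \<noteq> 0" for i
  proof
    assume "Q3 i = 0"
    then have "poly (Q3 i) 0 = 0" by simp
    then show False by (simp add: Q3_def Pl_def ps_def ji_def split: if_splits)
  qed
  have Q0nz: "Q0 \<noteq> 0"
  proof
    assume "Q0 = 0"
    then have "poly Q0 1 = 0" by simp
    then show False using q unfolding pQ0 P1 by simp
  qed
  define \<Q> where "\<Q> = {Q0, Q1} \<union> Q2 ` {..n} \<union> Q3 ` {..<s}"
  have "finite \<Q>" "0 \<notin> \<Q>" using Q0nz Q1nz Q2nz Q3nz by (auto simp: \<Q>_def)
  then obtain t where t: "\<forall>Q\<in>\<Q>. poly Q t \<noteq> 0" using exists_nonroot_set by blast
  define p where "p = P t"
  have "valid_config n s p" unfolding valid_config_def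
  proof (intro allI impI)
    fix i assume "i < s"
    then have "poly (Q3 i) t \<noteq> 0" using t by (auto simp: \<Q>_def)
    then have "p i (ji i) \<noteq> 0" by (simp add: Q3_def p_def P_def)
    moreover have "ji i \<le> n" by (simp add: ji_def)
    ultimately show "\<exists>j\<le>n. p i j \<noteq> 0" by blast
  qed
  moreover have "geval n s G p \<noteq> 0" using t pQ0 by (auto simp: \<Q>_def p_def)
  moreover have "det (Mp n p) \<noteq> 0" using t pQ1 by (auto simp: \<Q>_def p_def)
  moreover have "\<forall>i\<le>n. det (replace_col (Mp n p) (wp n p) i) \<noteq> 0"
  proof (intro allI impI)
    fix i assume "i \<le> n"
    then have "Q2 i \<in> \<Q>" by (simp add: \<Q>_def)
    then have "poly (Q2 i) t \<noteq> 0" using t by blast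
    then show "det (replace_col (Mp n p) (wp n p) i) \<noteq> 0" unfolding pQ2 p_def .
  qed
  ultimately show ?thesis by blast
qed


lemma deriv_eval_cong:
  assumes "\<forall>j\<le>n. x j = y j"
  shows "deriv_eval n d c \<beta> x = deriv_eval n d c \<beta> y"
  unfolding deriv_eval_def using assms by (auto intro!: sum.cong prod.cong)

lemma mult_ge_cong:
  assumes "\<forall>j\<le>n. x j = y j" "mult_ge n d c x m"
  shows "mult_ge n d c y m"
  using assms deriv_eval_cong[OF assms(1)] unfolding mult_ge_def by metis

lemma choose_b:
  fixes p :: "nat \<Rightarrow> nat \<Rightarrow> complex"
  assumes mu: "\<forall>i\<le>n. \<mu> i \<noteq> 0" and Dnz: "D \<noteq> 0"
    and solv: "\<forall>j\<le>n. (\<Sum>i\<le>n. e i * p i j) = D * x0 j"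
    and Fx0: "deriv_eval n d c (\<lambda>_. 0) x0 \<noteq> 0"
  shows "\<exists>b. (\<forall>i\<le>n. b i \<noteq> 0 \<and> b i \<noteq> 1) \<and> (\<forall>i\<le>n. \<forall>i'\<le>n. i \<noteq> i' \<longrightarrow> b i \<noteq> b i') \<and>
             deriv_eval n d c (\<lambda>_. 0) (\<lambda>j. \<Sum>i\<le>n. \<mu> i * b i * p i j) \<noteq> 0"
proof -
  define b0 where "b0 i = e i / \<mu> i" for i
  define b1 :: "nat \<Rightarrow> complex" where "b1 i = of_nat (i + 2)" for i
  have b1a: "b1 i \<noteq> 0" for i unfolding b1_def by (simp only: of_nat_eq_0_iff)
  have b1b: "b1 i \<noteq> 1" for i unfolding b1_def by (simp only: of_nat_eq_1_iff)
  have b1c: "b1 i \<noteq> b1 i'" if "i \<noteq> i'" for i i' unfolding b1_def using that by (simp only: of_nat_eq_iff)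
  define bl where "bl i = [:b0 i, b1 i - b0 i:]" for i
  have pbl: "poly (bl i) t = b0 i + t * (b1 i - b0 i)" for i t by (simp add: bl_def)
  define hF where "hF = FP n d c (\<lambda>j. \<Sum>i\<le>n. smult (\<mu> i * p i j) (bl i))"
  have phF: "poly hF t = deriv_eval n d c (\<lambda>_. 0) (\<lambda>j. \<Sum>i\<le>n. \<mu> i * poly (bl i) t * p i j)" for t
    unfolding hF_def poly_FP by (simp add: poly_sum algebra_simps)
  have "poly hF 0 = deriv_eval n d c (\<lambda>_. 0) (\<lambda>j. \<Sum>i\<le>n. e i * p i j)"
    unfolding phF pbl using mu by (intro deriv_eval_cong) (auto simp: b0_def intro!: sum.cong)
  also have "\<dots> = deriv_eval n d c (\<lambda>_. 0) (\<lambda>j. D * x0 j)"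
    by (rule deriv_eval_cong) (use solv in auto)
  also have "\<dots> = D ^ d * deriv_eval n d c (\<lambda>_. 0) x0" by (simp add: deriv_eval_scale)
  finally have hF0: "poly hF 0 \<noteq> 0" using Dnz Fx0 by simp
  define \<Q> where "\<Q> = {hF} \<union> (\<lambda>(i,i'). bl i - bl i') ` {(i,i'). i \<le> n \<and> i' \<le> n \<and> i \<noteq> i'}
      \<union> bl ` {..n} \<union> (\<lambda>i. bl i - 1) ` {..n}"
  have fin: "finite \<Q>"
  proof -
    have "{(i,i'). i \<le> n \<and> i' \<le> n \<and> i \<noteq> i'} \<subseteq> {..n} \<times> {..n}" by auto
    then have "finite {(i,i'). i \<le> n \<and> i' \<le> n \<and> i \<noteq> i'}" by (rule finite_subset) simp
    then show ?thesis by (simp add: \<Q>_def)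
  qed
  have nz: "0 \<notin> \<Q>"
  proof
    assume "0 \<in> \<Q>"
    then consider "hF = 0" | i i' where "i \<le> n" "i' \<le> n" "i \<noteq> i'" "bl i - bl i' = 0"
      | i where "bl i = 0" | i where "bl i - 1 = 0"
      unfolding \<Q>_def by auto
    then show False
    proof cases
      case 1 then show False using hF0 by simp
    next
      case (2 i i')
      then have "poly (bl i - bl i') 1 = 0" by simp
      then show False using b1c[OF 2(3)] by (simp add: pbl)
    next
      case (3 i)
      then have "poly (bl i) 1 = 0" by simp
      then show False using b1a[of i] by (simp add: pbl)
    next
      case (4 i)
      then have "poly (bl i - 1) 1 = 0" by simp
      then show False using b1b[of i] by (simp add: pbl)
    qed
  qed
  obtain t where t: "\<forall>Q\<in>\<Q>. poly Q t \<noteq> 0" using exists_nonroot_set[OF fin nz] by blast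
  define b where "b i = poly (bl i) t" for i
  have "\<forall>i\<le>n. b i \<noteq> 0 \<and> b i \<noteq> 1"
  proof (intro allI impI conjI)
    fix i assume i: "i \<le> n"
    have "poly (bl i) t \<noteq> 0" using t i by (auto simp: \<Q>_def)
    then show "b i \<noteq> 0" by (simp add: b_def)
    have "bl i - 1 \<in> \<Q>" using i unfolding \<Q>_def by blast
    then have "poly (bl i - 1) t \<noteq> 0" using t by blast
    then show "b i \<noteq> 1" by (simp add: b_def)
  qed
  moreover have "\<forall>i\<le>n. \<forall>i'\<le>n. i \<noteq> i' \<longrightarrow> b i \<noteq> b i'"
  proof (intro allI impI)
    fix i i' assume "i \<le> n" "i' \<le> n" "i \<noteq> i'"
    then have "(i,i') \<in> {(i,i'). i \<le> n \<and> i' \<le> n \<and> i \<noteq> i'}" by simp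
    then have "(\<lambda>(i,i'). bl i - bl i') (i,i') \<in> \<Q>" unfolding \<Q>_def by blast
    then have "bl i - bl i' \<in> \<Q>" by simp
    then have "poly (bl i - bl i') t \<noteq> 0" using t by blast
    then show "b i \<noteq> b i'" by (simp add: b_def)
  qed
  moreover have "deriv_eval n d c (\<lambda>_. 0) (\<lambda>j. \<Sum>i\<le>n. \<mu> i * b i * p i j) \<noteq> 0"
  proof -
    have "poly hF t \<noteq> 0" using t by (simp add: \<Q>_def)
    then show ?thesis unfolding phF b_def .
  qed
  ultimately show ?thesis by blast
qed


lemma sum_over_roots:
  fixes \<Phi> :: "complex poly"
  assumes nz: "\<Phi> \<noteq> 0" and fin: "finite R"
  shows "(\<Sum>x\<in>R. order x \<Phi>) \<le> degree \<Phi>"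
proof -
  define Z where "Z = {x. poly \<Phi> x = 0}"
  have finZ: "finite Z" using poly_roots_finite[OF nz] by (simp add: Z_def)
  have "(\<Sum>x\<in>R. order x \<Phi>) = (\<Sum>x\<in>R \<inter> Z. order x \<Phi>)"
  proof (rule sum.mono_neutral_right[OF fin])
    show "R \<inter> Z \<subseteq> R" by auto
    show "\<forall>i\<in>R - R \<inter> Z. order i \<Phi> = 0" by (auto simp: Z_def order_0I)
  qed
  also have "\<dots> \<le> (\<Sum>x\<in>Z. order x \<Phi>)" by (rule sum_mono2[OF finZ]) auto
  also have "\<dots> \<le> degree \<Phi>" using sum_order_le_degree[OF nz] by (simp add: Z_def)
  finally show ?thesis .
qed

lemma curve_bound:
  fixes p :: "nat \<Rightarrow> nat \<Rightarrow> complex" and \<mu> b :: "nat \<Rightarrow> complex"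
  assumes h: "homog_form n d c"
    and mu: "\<forall>i\<le>n. \<mu> i \<noteq> 0" and Dnz: "D \<noteq> 0"
    and R1: "\<forall>j\<le>n. (\<Sum>i\<le>n. \<mu> i * p i j) = D * p (Suc n) j"
    and bnz: "\<forall>i\<le>n. b i \<noteq> 0 \<and> b i \<noteq> 1" and bdist: "\<forall>i\<le>n. \<forall>i'\<le>n. i \<noteq> i' \<longrightarrow> b i \<noteq> b i'"
    and Fy: "deriv_eval n d c (\<lambda>_. 0) (\<lambda>j. \<Sum>i\<le>n. \<mu> i * b i * p i j) \<noteq> 0"
    and mult: "\<forall>i\<le>Suc n. mult_ge n d c (p i) (mm i)"
  shows "(\<Sum>i\<le>Suc n. mm i) \<le> n * d"
proof -
  define a where "a i = 1 / (1 - b i)" for i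
  have b1: "1 - b i \<noteq> 0" if "i \<le> n" for i using bnz that by auto
  have a_rel: "1 - a i = - b i * a i" if "i \<le> n" for i
    using b1[OF that] by (simp add: a_def field_simps)
  have anz: "a i \<noteq> 0" if "i \<le> n" for i using b1[OF that] by (simp add: a_def)
  have an1: "1 - a i \<noteq> 0" if "i \<le> n" for i
    using a_rel[OF that] anz[OF that] bnz that by auto
  have ainj: "a i \<noteq> a i'" if "i \<le> n" "i' \<le> n" "i \<noteq> i'" for i i'
  proof
    assume "a i = a i'"
    then have "1 - b i = 1 - b i'" using b1[OF that(1)] b1[OF that(2)] by (simp add: a_def field_simps)
    then show False using bdist that by auto
  qed
  define L where "L i = (\<Prod>k\<in>{..n}-{i}. [:-a k, 1:])" for i
  define \<gamma> where "\<gamma> j = (\<Sum>i\<le>n. smult (\<mu> i * (1 - a i) * p i j) (L i))" for j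
  have pL: "poly (L i) t = (\<Prod>k\<in>{..n}-{i}. t - a k)" for i t by (simp add: L_def poly_prod)
  have degL: "degree (L i) \<le> n" if "i \<le> n" for i
  proof -
    have "degree (L i) \<le> (\<Sum>k\<in>{..n}-{i}. degree [:-a k, 1:])"
      unfolding L_def using degree_prod_sum_le[of "{..n}-{i}" "\<lambda>k. [:-a k, 1:]"] by (simp add: o_def)
    also have "\<dots> = card ({..n}-{i})" by simp
    also have "\<dots> = n" using that by simp
    finally show ?thesis .
  qed
  have degg: "\<forall>j\<le>n. degree (\<gamma> j) \<le> n"
  proof (intro allI impI)
    fix j
    show "degree (\<gamma> j) \<le> n" unfolding \<gamma>_def
    proof (rule degree_sum_le)
      fix i assume "i \<in> {..n}"
      then show "degree (smult (\<mu> i * (1 - a i) * p i j) (L i)) \<le> n"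
        using degL degree_smult_le le_trans by fastforce
    qed simp
  qed
  define \<Phi> where "\<Phi> = FP n d c \<gamma>"
  have degPhi: "degree \<Phi> \<le> d * n" unfolding \<Phi>_def by (rule degree_FP[OF degg])
  have pg: "poly (\<gamma> j) t = (\<Sum>i\<le>n. \<mu> i * (1 - a i) * p i j * (\<Prod>k\<in>{..n}-{i}. t - a k))" for j t
    by (simp add: \<gamma>_def poly_sum pL)
  define K where "K = (\<Prod>k\<le>n. - a k)"
  have Knz: "K \<noteq> 0" using anz by (simp add: K_def)
  have g0: "poly (\<gamma> j) 0 = K * (\<Sum>i\<le>n. \<mu> i * b i * p i j)" for j
  proof -
    have "\<mu> i * (1 - a i) * p i j * (\<Prod>k\<in>{..n}-{i}. 0 - a k) = K * (\<mu> i * b i * p i j)" if i: "i \<le> n" for i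
    proof -
      have "K = (- a i) * (\<Prod>k\<in>{..n}-{i}. - a k)"
        unfolding K_def by (rule prod.remove) (use i in auto)
      moreover have "\<mu> i * (1 - a i) * p i j * (\<Prod>k\<in>{..n}-{i}. 0 - a k) =
          \<mu> i * (- b i * a i) * p i j * (\<Prod>k\<in>{..n}-{i}. - a k)"
        using a_rel[OF i] by simp
      ultimately show ?thesis by (simp add: algebra_simps)
    qed
    then show ?thesis unfolding pg sum_distrib_left by (intro sum.cong) auto
  qed
  have Phi0: "poly \<Phi> 0 \<noteq> 0"
  proof -
    have "poly \<Phi> 0 = deriv_eval n d c (\<lambda>_. 0) (\<lambda>j. K * (\<Sum>i\<le>n. \<mu> i * b i * p i j))"
      unfolding \<Phi>_def poly_FP g0 ..
    also have "\<dots> = K ^ d * deriv_eval n d c (\<lambda>_. 0) (\<lambda>j. \<Sum>i\<le>n. \<mu> i * b i * p i j)"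
      by (simp add: deriv_eval_scale)
    finally show ?thesis using Knz Fy by simp
  qed
  then have Phinz: "\<Phi> \<noteq> 0" by auto
  define \<kappa> where "\<kappa> i = \<mu> i * (1 - a i) * (\<Prod>k\<in>{..n}-{i}. a i - a k)" for i
  have ga: "poly (\<gamma> j) (a i) = \<kappa> i * p i j" if i: "i \<le> n" for i j
  proof -
    have z: "\<forall>i'\<in>{..n} - {i}. \<mu> i' * (1 - a i') * p i' j * (\<Prod>k\<in>{..n}-{i'}. a i - a k) = 0"
    proof
      fix i' assume "i' \<in> {..n} - {i}"
      then have "i \<in> {..n} - {i'}" using i by auto
      then have "(\<Prod>k\<in>{..n}-{i'}. a i - a k) = 0" by (intro prod_zero) auto
      then show "\<mu> i' * (1 - a i') * p i' j * (\<Prod>k\<in>{..n}-{i'}. a i - a k) = 0" by simp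
    qed
    have "poly (\<gamma> j) (a i) = (\<Sum>i'\<in>{i}. \<mu> i' * (1 - a i') * p i' j * (\<Prod>k\<in>{..n}-{i'}. a i - a k))"
      unfolding pg by (rule sum.mono_neutral_right[OF finite_atMost _ z]) (use i in auto)
    then show ?thesis by (simp add: \<kappa>_def algebra_simps)
  qed
  have knz: "\<kappa> i \<noteq> 0" if i: "i \<le> n" for i
  proof -
    have "(\<Prod>k\<in>{..n}-{i}. a i - a k) \<noteq> 0" using ainj i by (auto simp: prod_zero_iff)
    then show ?thesis using mu an1 i by (simp add: \<kappa>_def)
  qed
  define E where "E = (\<Prod>k\<le>n. 1 - a k) * D"
  have Enz: "E \<noteq> 0" using an1 Dnz by (simp add: E_def)
  have g1: "poly (\<gamma> j) 1 = E * p (Suc n) j" if j: "j \<le> n" for j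
  proof -
    have "\<mu> i * (1 - a i) * p i j * (\<Prod>k\<in>{..n}-{i}. 1 - a k) = (\<Prod>k\<le>n. 1 - a k) * (\<mu> i * p i j)"
      if i: "i \<le> n" for i
    proof -
      have eq: "(\<Prod>k\<le>n. 1 - a k) = (1 - a i) * (\<Prod>k\<in>{..n}-{i}. 1 - a k)"
        by (rule prod.remove) (use i in auto)
      show ?thesis unfolding eq by (simp add: algebra_simps)
    qed
    then have "poly (\<gamma> j) 1 = (\<Prod>k\<le>n. 1 - a k) * (\<Sum>i\<le>n. \<mu> i * p i j)"
      unfolding pg sum_distrib_left by (intro sum.cong) auto
    then show ?thesis using R1 j by (simp add: E_def)
  qed
  have ord_i: "mm i \<le> order (a i) \<Phi>" if i: "i \<le> n" for i
  proof -
    have m1: "mult_ge n d c (\<lambda>j. \<kappa> i * p i j) (mm i)" using mult i by (intro mult_scale) simp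
    have "[:-a i, 1:] ^ mm i dvd \<Phi>"
      unfolding \<Phi>_def by (rule DV[OF _ h m1]) (use ga[OF i] in simp)
    then show ?thesis using Phinz order_divides by blast
  qed
  have ord_n: "mm (Suc n) \<le> order 1 \<Phi>"
  proof -
    have m1: "mult_ge n d c (\<lambda>j. E * p (Suc n) j) (mm (Suc n))" using mult by (intro mult_scale) simp
    then have m2: "mult_ge n d c (\<lambda>j. poly (\<gamma> j) 1) (mm (Suc n))"
      by (rule mult_ge_cong[rotated]) (use g1 in simp)
    have "[:-1, 1:] ^ mm (Suc n) dvd \<Phi>"
      unfolding \<Phi>_def by (rule DV[OF _ h m2]) simp
    then show ?thesis using Phinz order_divides by blast
  qed
  have injA: "inj_on a {..n}" using ainj by (meson atMost_iff inj_onI)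
  have notin: "1 \<notin> a ` {..n}" using an1 by auto
  have "(\<Sum>i\<le>Suc n. mm i) = (\<Sum>i\<le>n. mm i) + mm (Suc n)" by simp
  also have "\<dots> \<le> (\<Sum>i\<le>n. order (a i) \<Phi>) + order 1 \<Phi>"
    using ord_i ord_n by (intro add_mono sum_mono) auto
  also have "(\<Sum>i\<le>n. order (a i) \<Phi>) = (\<Sum>x\<in>a ` {..n}. order x \<Phi>)"
    by (rule sum.reindex[OF injA, symmetric, unfolded o_def])
  also have "(\<Sum>x\<in>a ` {..n}. order x \<Phi>) + order 1 \<Phi> = (\<Sum>x\<in>insert 1 (a ` {..n}). order x \<Phi>)"
    using notin by simp
  also have "\<dots> \<le> degree \<Phi>" by (rule sum_over_roots[OF Phinz]) simp
  also have "\<dots> \<le> n * d" using degPhi by (simp add: mult.commute)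
  finally show ?thesis .
qed


lemma adj_solve:
  fixes p :: "nat \<Rightarrow> nat \<Rightarrow> complex"
  assumes j: "j \<le> n"
  shows "(\<Sum>i\<le>n. (adj_mat (Mp n p) *\<^sub>v vec (Suc n) y) $ i * p i j) = det (Mp n p) * y j"
proof -
  define M where "M = Mp n p"
  define v where "v = vec (Suc n) y"
  define u where "u = adj_mat M *\<^sub>v v"
  have Mc: "M \<in> carrier_mat (Suc n) (Suc n)" by (simp add: M_def Mp_carrier)
  have vc: "v \<in> carrier_vec (Suc n)" by (simp add: v_def)
  have ac: "adj_mat M \<in> carrier_mat (Suc n) (Suc n)" by (rule adj_mat(1)[OF Mc])
  have "M *\<^sub>v u = (M * adj_mat M) *\<^sub>v v" unfolding u_def using Mc ac vc by simp
  also have "\<dots> = (det M \<cdot>\<^sub>m 1\<^sub>m (Suc n)) *\<^sub>v v" using adj_mat(2)[OF Mc] by simp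
  finally have E: "M *\<^sub>v u = (det M \<cdot>\<^sub>m 1\<^sub>m (Suc n)) *\<^sub>v v" .
  have jn: "j < Suc n" using j by simp
  have "((det M \<cdot>\<^sub>m 1\<^sub>m (Suc n)) *\<^sub>v v) $ j = (\<Sum>i\<in>{0..<Suc n}. (det M \<cdot>\<^sub>m 1\<^sub>m (Suc n)) $$ (j,i) * v $ i)"
    using jn vc by (simp add: mult_mat_vec_def scalar_prod_def row_def)
  also have "\<dots> = (\<Sum>i\<in>{0..<Suc n}. (if i = j then det M * y j else 0))"
    by (rule sum.cong[OF refl]) (use jn in \<open>auto simp: v_def\<close>)
  also have "\<dots> = det M * y j" using jn by (simp add: sum.delta')
  finally have "((det M \<cdot>\<^sub>m 1\<^sub>m (Suc n)) *\<^sub>v v) $ j = det M * y j" .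
  moreover have "(M *\<^sub>v u) $ j = (\<Sum>i\<le>n. u $ i * p i j)"
  proof -
    have du: "dim_vec u = Suc n" using ac by (simp add: u_def)
    have "(M *\<^sub>v u) $ j = row M j \<bullet> u" using Mc jn by simp
    also have "\<dots> = (\<Sum>i<Suc n. p i j * u $ i)"
      unfolding scalar_prod_def du using jn by (auto simp: M_def Mp_def row_def intro!: sum.cong)
    finally show ?thesis by (simp add: lessThan_Suc_atMost mult.commute)
  qed
  ultimately show ?thesis using E by (simp add: u_def v_def M_def)
qed

lemma converse:
  fixes n d s :: nat and m :: "nat \<Rightarrow> nat"
  assumes n1: "1 \<le> n" and sn: "s \<le> n + 2" and L: "L_nonempty n d s m"
  shows "(\<forall>i<s. m i \<le> d) \<and> (\<Sum>i<s. m i) \<le> n * d"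
proof -
  obtain G where fin: "finite {\<gamma>. G \<gamma> \<noteq> 0}" and ne: "{\<gamma>. G \<gamma> \<noteq> 0} \<noteq> {}"
    and supp: "\<forall>\<gamma>. G \<gamma> \<noteq> 0 \<longrightarrow> (\<forall>i j. \<gamma> i j \<noteq> 0 \<longrightarrow> i < s \<and> j \<le> n)"
    and HH: "\<forall>p. valid_config n s p \<longrightarrow> geval n s G p \<noteq> 0 \<longrightarrow>
       (\<exists>c. homog_form n d c \<and> (\<exists>\<alpha>. c \<alpha> \<noteq> 0) \<and> (\<forall>i<s. mult_ge n d c (p i) (m i)))"
    using L unfolding L_nonempty_def for_general_points_def by (elim exE conjE) (rule that)
  obtain p where pv: "valid_config n s p" and pg: "geval n s G p \<noteq> 0" and pD: "det (Mp n p) \<noteq> 0"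
    and pmu: "\<forall>i\<le>n. det (replace_col (Mp n p) (wp n p) i) \<noteq> 0"
    using good_config[OF fin ne supp] by blast
  obtain c where h: "homog_form n d c" and cnz: "\<exists>\<alpha>. c \<alpha> \<noteq> 0" and cm: "\<forall>i<s. mult_ge n d c (p i) (m i)"
    using HH pv pg by blast
  have part1: "\<forall>i<s. m i \<le> d" using mult_le_deg[OF h cnz] cm by blast
  define D where "D = det (Mp n p)"
  define \<mu> where "\<mu> i = det (replace_col (Mp n p) (wp n p) i)" for i
  have mu: "\<forall>i\<le>n. \<mu> i \<noteq> 0" using pmu by (simp add: \<mu>_def)
  have Dnz: "D \<noteq> 0" using pD by (simp add: D_def)
  have wv: "wp n p = vec (Suc n) (\<lambda>j. p (Suc n) j)" by (simp add: wp_def)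
  have muadj: "\<mu> i = (adj_mat (Mp n p) *\<^sub>v vec (Suc n) (\<lambda>j. p (Suc n) j)) $ i" if "i \<le> n" for i
    unfolding \<mu>_def wv[symmetric] by (rule adj_col[OF Mp_carrier wp_carrier, symmetric]) (use that in simp)
  have R1: "\<forall>j\<le>n. (\<Sum>i\<le>n. \<mu> i * p i j) = D * p (Suc n) j"
  proof (intro allI impI)
    fix j assume j: "j \<le> n"
    have "(\<Sum>i\<le>n. \<mu> i * p i j) = (\<Sum>i\<le>n. (adj_mat (Mp n p) *\<^sub>v vec (Suc n) (\<lambda>j. p (Suc n) j)) $ i * p i j)"
      by (rule sum.cong[OF refl]) (simp add: muadj)
    also have "\<dots> = D * p (Suc n) j" unfolding D_def by (rule adj_solve[OF j])
    finally show "(\<Sum>i\<le>n. \<mu> i * p i j) = D * p (Suc n) j" .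
  qed
  obtain \<alpha>0 where a0: "c \<alpha>0 \<noteq> 0" using cnz by blast
  obtain x0 where x0: "deriv_eval n d c (\<lambda>_. 0) x0 \<noteq> 0" using form_nonzero_point[OF h a0] by blast
  define e where "e i = (adj_mat (Mp n p) *\<^sub>v vec (Suc n) x0) $ i" for i
  have solv: "\<forall>j\<le>n. (\<Sum>i\<le>n. e i * p i j) = D * x0 j"
    unfolding e_def D_def using adj_solve by blast
  obtain b where bnz: "\<forall>i\<le>n. b i \<noteq> 0 \<and> b i \<noteq> 1" and bdist: "\<forall>i\<le>n. \<forall>i'\<le>n. i \<noteq> i' \<longrightarrow> b i \<noteq> b i'"
    and Fy: "deriv_eval n d c (\<lambda>_. 0) (\<lambda>j. \<Sum>i\<le>n. \<mu> i * b i * p i j) \<noteq> 0"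
    using choose_b[OF mu Dnz solv x0] by blast
  define mm where "mm i = (if i < s then m i else 0)" for i
  have mult: "\<forall>i\<le>Suc n. mult_ge n d c (p i) (mm i)"
    using cm by (auto simp: mm_def mult_ge_def)
  have "(\<Sum>i\<le>Suc n. mm i) \<le> n * d" by (rule curve_bound[OF h mu Dnz R1 bnz bdist Fy mult])
  moreover have "(\<Sum>i\<le>Suc n. mm i) = (\<Sum>i<s. m i)"
  proof -
    have "(\<Sum>i\<le>Suc n. mm i) = (\<Sum>i<s. mm i)"
      using sn by (intro sum.mono_neutral_right) (auto simp: mm_def)
    also have "\<dots> = (\<Sum>i<s. m i)" by (simp add: mm_def)
    finally show ?thesis .
  qed
  ultimately show ?thesis using part1 by simp
qed

theorem lemma2p2:
  fixes n d s :: nat and m :: "nat \<Rightarrow> nat"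
  assumes "n \<ge> 1" and "s \<ge> 1"
  shows "(((\<forall>i<s. m i \<le> d) \<and> (\<Sum>i<s. m i) \<le> n * d) \<longrightarrow> L_nonempty n d s m) \<and>
         (s \<le> n + 2 \<longrightarrow>
            (L_nonempty n d s m \<longleftrightarrow> ((\<forall>i<s. m i \<le> d) \<and> (\<Sum>i<s. m i) \<le> n * d)))"
proof (intro conjI impI)
  assume "(\<forall>i<s. m i \<le> d) \<and> (\<Sum>i<s. m i) \<le> n * d"
  then show "L_nonempty n d s m" using forward[of n s m d] assms(1) by blast
next
  assume sn: "s \<le> n + 2"
  show "L_nonempty n d s m \<longleftrightarrow> ((\<forall>i<s. m i \<le> d) \<and> (\<Sum>i<s. m i) \<le> n * d)"
  proof
    assume "L_nonempty n d s m"
    then show "(\<forall>i<s. m i \<le> d) \<and> (\<Sum>i<s. m i) \<le> n * d" using converse[OF assms(1) sn] by blast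
  next
    assume "(\<forall>i<s. m i \<le> d) \<and> (\<Sum>i<s. m i) \<le> n * d"
    then show "L_nonempty n d s m" using forward[of n s m d] assms(1) by blast
  qed
qed

end
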